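(* Let $G$ be a graph with a linear order $<$ on $V(G)$ satisfying the X-property, and let $s<t$ be vertices with $d^*:=\operatorname{dist}(s,t)<\infty$. Then there is a shortest $s$-$t$ path $P=p_0,p_1,\dots,p_{d^*}$ (with $p_0=s$, $p_{d^*}=t$) such that (i) $p_i\in\{\alpha_s(i),\beta_s(i)\}$ for all $i<\operatorname{righti}(P)$, and (ii) $p_i\in\{\alpha_t(d^*-i),\beta_t(d^*-i)\}$ for all $i>\operatorname{lefti}(P)$.
   Context: The X-property: for all vertices $p<q<r<s$, if $\{p,r\}\in E(G)$ and $\{q,s\}\in E(G)$ then $\{p,s\}\in E(G)$. $\operatorname{dist}$ is the number of edges of a shortest path. $\operatorname{lefti}(P)$ / $\operatorname{righti}(P)$ is the index of the leftmost / rightmost vertex of $P$ w.r.t. $<$. For an integer $k\ge 0$: $\alpha_s(k)$ (resp. $\beta_s(k)$) is the leftmost (resp. rightmost) vertex reachable from $s$ by a path of length at most $k$ using only vertices $v\le t$; $\alpha_t(k)$ (resp. $\beta_t(k)$) is the rightmost (resp. leftmost) vertex reachable from $t$ by a path of length at most $k$ using only vertices $v\ge s$. *)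

theory Defs
  imports Main
begin

definition simple_graph :: "'a set \<Rightarrow> ('a \<Rightarrow> 'a \<Rightarrow> bool) \<Rightarrow> bool" where
  "simple_graph V E \<longleftrightarrow> finite V \<and> (\<forall>u v. E u v \<longrightarrow> u \<in> V \<and> v \<in> V)
     \<and> (\<forall>u v. E u v \<longrightarrow> E v u) \<and> (\<forall>u. \<not> E u u)"

definition X_property :: "'a::linorder set \<Rightarrow> ('a \<Rightarrow> 'a \<Rightarrow> bool) \<Rightarrow> bool" where
  "X_property V E \<longleftrightarrow> (\<forall>p\<in>V. \<forall>q\<in>V. \<forall>r\<in>V. \<forall>s\<in>V.
      p < q \<and> q < r \<and> r < s \<and> E p r \<and> E q s \<longrightarrow> E p s)"

text \<open>A walk is a nonempty vertex list with consecutive vertices adjacent; its length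
  is the number of edges, i.e. length minus one.\<close>
definition walk :: "'a set \<Rightarrow> ('a \<Rightarrow> 'a \<Rightarrow> bool) \<Rightarrow> 'a list \<Rightarrow> bool" where
  "walk V E xs \<longleftrightarrow> xs \<noteq> [] \<and> set xs \<subseteq> V \<and>
     (\<forall>i. Suc i < length xs \<longrightarrow> E (xs ! i) (xs ! Suc i))"

definition walk_from_to :: "'a set \<Rightarrow> ('a \<Rightarrow> 'a \<Rightarrow> bool) \<Rightarrow> 'a \<Rightarrow> 'a \<Rightarrow> 'a list \<Rightarrow> bool" where
  "walk_from_to V E u v xs \<longleftrightarrow> walk V E xs \<and> hd xs = u \<and> last xs = v"

text \<open>Distance (number of edges of a shortest path); meaningful when a walk exists.\<close>
definition dist :: "'a set \<Rightarrow> ('a \<Rightarrow> 'a \<Rightarrow> bool) \<Rightarrow> 'a \<Rightarrow> 'a \<Rightarrow> nat" where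
  "dist V E u v = (LEAST n. \<exists>xs. walk_from_to V E u v xs \<and> length xs = Suc n)"

definition reach_within :: "'a set \<Rightarrow> ('a \<Rightarrow> 'a \<Rightarrow> bool) \<Rightarrow> 'a set \<Rightarrow> 'a \<Rightarrow> nat \<Rightarrow> 'a set" where
  "reach_within V E W u k = {v. \<exists>xs. walk_from_to V E u v xs \<and> length xs \<le> Suc k \<and> set xs \<subseteq> W}"

definition alpha_s :: "'a::linorder set \<Rightarrow> ('a \<Rightarrow> 'a \<Rightarrow> bool) \<Rightarrow> 'a \<Rightarrow> 'a \<Rightarrow> nat \<Rightarrow> 'a" where
  "alpha_s V E s t k = Min (reach_within V E {v. v \<le> t} s k)"

definition beta_s :: "'a::linorder set \<Rightarrow> ('a \<Rightarrow> 'a \<Rightarrow> bool) \<Rightarrow> 'a \<Rightarrow> 'a \<Rightarrow> nat \<Rightarrow> 'a" where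
  "beta_s V E s t k = Max (reach_within V E {v. v \<le> t} s k)"

definition alpha_t :: "'a::linorder set \<Rightarrow> ('a \<Rightarrow> 'a \<Rightarrow> bool) \<Rightarrow> 'a \<Rightarrow> 'a \<Rightarrow> nat \<Rightarrow> 'a" where
  "alpha_t V E s t k = Max (reach_within V E {v. s \<le> v} t k)"

definition beta_t :: "'a::linorder set \<Rightarrow> ('a \<Rightarrow> 'a \<Rightarrow> bool) \<Rightarrow> 'a \<Rightarrow> 'a \<Rightarrow> nat \<Rightarrow> 'a" where
  "beta_t V E s t k = Min (reach_within V E {v. s \<le> v} t k)"

definition lefti :: "'a::linorder list \<Rightarrow> nat" where
  "lefti P = (LEAST i. i < length P \<and> P ! i = Min (set P))"

definition righti :: "'a::linorder list \<Rightarrow> nat" where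
  "righti P = (LEAST i. i < length P \<and> P ! i = Max (set P))"

end

theory Submission
  imports Defs "HOL-Library.Dual_Ordered_Lattice"
begin

instance dual :: (linorder) linorder
proof
  fix x y :: "'a dual"
  show "x \<le> y \<or> y \<le> x" by (simp add: dual_less_eq_iff linear)
qed

lemma walk_nth_V: "walk V E xs \<Longrightarrow> i < length xs \<Longrightarrow> xs ! i \<in> V"
  unfolding walk_def by auto

lemma walk_edge: "walk V E xs \<Longrightarrow> Suc i < length xs \<Longrightarrow> E (xs ! i) (xs ! Suc i)"
  unfolding walk_def by auto

lemma walk_take: "walk V E xs \<Longrightarrow> 0 < n \<Longrightarrow> walk V E (take n xs)"
  unfolding walk_def by (auto dest: in_set_takeD)

lemma walk_drop: "walk V E xs \<Longrightarrow> n < length xs \<Longrightarrow> walk V E (drop n xs)"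
  unfolding walk_def by (auto dest: in_set_dropD)

lemma walk_append:
  assumes "walk V E xs" "walk V E ys" "E (last xs) (hd ys)"
  shows "walk V E (xs @ ys)"
  unfolding walk_def
proof (intro conjI allI impI)
  show "xs @ ys \<noteq> []" using assms(1) by (simp add: walk_def)
  show "set (xs @ ys) \<subseteq> V" using assms(1,2) by (simp add: walk_def)
  fix i assume i: "Suc i < length (xs @ ys)"
  consider "Suc i < length xs" | "Suc i = length xs" | "Suc i > length xs" by arith
  then show "E ((xs @ ys) ! i) ((xs @ ys) ! Suc i)"
  proof cases
    case 1 then show ?thesis using assms(1) by (simp add: nth_append walk_def)
  next
    case 2
    have "xs \<noteq> []" "ys \<noteq> []" using assms(1,2) by (auto simp: walk_def)
    then have "(xs @ ys) ! i = last xs" "(xs @ ys) ! Suc i = hd ys"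
    proof -
      have "i = length xs - 1" using 2 by simp
      then show "(xs @ ys) ! i = last xs" "(xs @ ys) ! Suc i = hd ys"
        using 2 \<open>xs \<noteq> []\<close> \<open>ys \<noteq> []\<close> by (auto simp: nth_append last_conv_nth hd_conv_nth)
    qed
    then show ?thesis using assms(3) by simp
  next
    case 3
    then have "Suc (i - length xs) < length ys" using i by simp
    then have "E (ys ! (i - length xs)) (ys ! Suc (i - length xs))" using assms(2) by (simp add: walk_def)
    moreover have "Suc i - length xs = Suc (i - length xs)" using 3 by simp
    ultimately show ?thesis using 3 by (simp add: nth_append)
  qed
qed

lemma wft_def2: "walk_from_to V E u v xs \<longleftrightarrow> walk V E xs \<and> xs ! 0 = u \<and> xs ! (length xs - 1) = v"
  unfolding walk_from_to_def walk_def by (auto simp: hd_conv_nth last_conv_nth)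

lemma wft_take:
  assumes "walk V E xs" "a < length xs"
  shows "walk_from_to V E (xs ! 0) (xs ! a) (take (Suc a) xs)"
proof -
  have "min (length xs) (Suc a) = Suc a" using assms by simp
  then show ?thesis using assms walk_take[of V E xs "Suc a"] by (auto simp: wft_def2)
qed

lemma wft_drop:
  assumes "walk V E xs" "a < length xs"
  shows "walk_from_to V E (xs ! a) (xs ! (length xs - 1)) (drop a xs)"
  using assms walk_drop[of V E xs a] by (simp add: wft_def2)

lemma wft_join_edge:
  assumes "walk_from_to V E x y A" "walk_from_to V E y' z B" "E y y'"
  shows "walk_from_to V E x z (A @ B)"
  using assms walk_append[of V E A B] unfolding walk_from_to_def walk_def
  by auto

lemma wft_join:
  assumes "walk_from_to V E x y A" "walk_from_to V E y z B"
  shows "walk_from_to V E x z (A @ tl B)"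
proof (cases "tl B = []")
  case True
  then have "B = [y]" using assms(2) unfolding walk_from_to_def walk_def
    by (cases B) auto
  then show ?thesis using assms True by (auto simp: walk_from_to_def)
next
  case False
  have B: "B \<noteq> []" "walk V E B" "hd B = y" "last B = z" using assms(2) by (auto simp: walk_from_to_def walk_def)
  have "walk V E (tl B)" using walk_drop[of V E B 1] B False by (cases B) auto
  moreover have "E (last A) (hd (tl B))"
  proof -
    have "Suc 0 < length B" using False B by (cases B) auto
    then have "E (B ! 0) (B ! Suc 0)" using B(2) walk_edge by blast
    then show ?thesis using assms(1) B False by (cases B) (auto simp: walk_from_to_def hd_conv_nth)
  qed
  ultimately have "walk V E (A @ tl B)" using walk_append assms(1) by (auto simp: walk_from_to_def)
  then show ?thesis using assms False B by (auto simp: walk_from_to_def walk_def last_tl)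
qed

lemma wft_single: "x \<in> V \<Longrightarrow> walk_from_to V E x x [x]"
  by (simp add: walk_from_to_def walk_def)

lemma wft_length: "walk_from_to V E x y A \<Longrightarrow> 0 < length A"
  by (simp add: walk_from_to_def walk_def)

lemma wft_set: "walk_from_to V E x y A \<Longrightarrow> set A \<subseteq> V"
  by (simp add: walk_from_to_def walk_def)

lemma wft_ends: "walk_from_to V E x y A \<Longrightarrow> x \<in> set A \<and> y \<in> set A"
  by (auto simp: walk_from_to_def walk_def)

lemma walk_rev:
  assumes sym: "\<And>u v. E u v \<Longrightarrow> E v u" and w: "walk V E xs"
  shows "walk V E (rev xs)"
  unfolding walk_def
proof (intro conjI allI impI)
  show "rev xs \<noteq> []" "set (rev xs) \<subseteq> V" using w by (auto simp: walk_def)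
  fix i assume i: "Suc i < length (rev xs)"
  let ?n = "length xs"
  have "Suc (?n - Suc (Suc i)) < ?n" using i by simp
  then have "E (xs ! (?n - Suc (Suc i))) (xs ! Suc (?n - Suc (Suc i)))" using w walk_edge by blast
  moreover have "Suc (?n - Suc (Suc i)) = ?n - Suc i" using i by simp
  ultimately show "E (rev xs ! i) (rev xs ! Suc i)" using i sym by (simp add: rev_nth)
qed

lemma wft_rev:
  assumes sym: "\<And>u v. E u v \<Longrightarrow> E v u" and w: "walk_from_to V E x y xs"
  shows "walk_from_to V E y x (rev xs)"
  using w walk_rev[OF sym] by (auto simp: walk_from_to_def hd_rev last_rev)

lemma step_exists:
  fixes g :: "nat \<Rightarrow> 'b"
  assumes "Q (g a)" "\<not> Q (g b)" "a \<le> b"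
  shows "\<exists>j. a \<le> j \<and> j < b \<and> Q (g j) \<and> \<not> Q (g (Suc j))"
  using assms
proof (induction b)
  case 0 then show ?case by simp
next
  case (Suc b)
  show ?case
  proof (cases "Q (g b)")
    case True then show ?thesis using Suc by (intro exI[of _ b]) (auto simp: le_Suc_eq)
  next
    case False
    have "a \<le> b" using Suc False by (auto simp: le_Suc_eq)
    then show ?thesis using Suc.IH[OF Suc.prems(1) False] by auto
  qed
qed


lemma righti_eq:
  assumes "distinct xs" "i < length xs" "xs ! i = Max (set xs)"
  shows "righti xs = i"
  unfolding righti_def
proof (rule Least_equality)
  show "i < length xs \<and> xs ! i = Max (set xs)" using assms by simp
  fix j assume "j < length xs \<and> xs ! j = Max (set xs)"
  then have "j = i" using assms nth_eq_iff_index_eq by metis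
  then show "i \<le> j" by simp
qed

lemma lefti_eq:
  assumes "distinct xs" "i < length xs" "xs ! i = Min (set xs)"
  shows "lefti xs = i"
  unfolding lefti_def
proof (rule Least_equality)
  show "i < length xs \<and> xs ! i = Min (set xs)" using assms by simp
  fix j assume "j < length xs \<and> xs ! j = Min (set xs)"
  then have "j = i" using assms nth_eq_iff_index_eq by metis
  then show "i \<le> j" by simp
qed

lemma righti_prop:
  assumes "xs \<noteq> []"
  shows "righti xs < length xs \<and> xs ! righti xs = Max (set xs)"
proof -
  have "Max (set xs) \<in> set xs" using assms by simp
  then obtain i where "i < length xs" "xs ! i = Max (set xs)" by (metis in_set_conv_nth)
  then show ?thesis unfolding righti_def by (rule LeastI[where P="\<lambda>i. i < length xs \<and> xs ! i = Max (set xs)", OF conjI])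
qed

lemma lefti_prop:
  assumes "xs \<noteq> []"
  shows "lefti xs < length xs \<and> xs ! lefti xs = Min (set xs)"
proof -
  have "Min (set xs) \<in> set xs" using assms by simp
  then obtain i where "i < length xs" "xs ! i = Min (set xs)" by (metis in_set_conv_nth)
  then show ?thesis unfolding lefti_def by (rule LeastI[where P="\<lambda>i. i < length xs \<and> xs ! i = Min (set xs)", OF conjI])
qed

section \<open>Duality\<close>

definition dE :: "('a \<Rightarrow> 'a \<Rightarrow> bool) \<Rightarrow> 'a dual \<Rightarrow> 'a dual \<Rightarrow> bool" where
  "dE E u v = E (undual u) (undual v)"

lemma mem_dual_image: "x \<in> dual ` V \<longleftrightarrow> undual x \<in> V"
  by (metis dual_undual image_iff undual_dual)

lemma walk_dual: "walk (dual ` V) (dE E) xs \<longleftrightarrow> walk V E (map undual xs)"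
  unfolding walk_def dE_def by (auto simp: mem_dual_image)

lemma wft_dual: "walk_from_to (dual ` V) (dE E) x y xs \<longleftrightarrow> walk_from_to V E (undual x) (undual y) (map undual xs)"
  unfolding walk_from_to_def walk_dual
  by (auto simp: walk_def hd_map last_map dual_eq_iff)

lemma map_dual_undual: "map dual (map undual xs) = xs"
  by (induction xs) auto

lemma map_undual_dual: "map undual (map dual xs) = xs"
  by (induction xs) auto

lemma reach_dual:
  "reach_within (dual ` V) (dE E) (dual ` S) x k = dual ` reach_within V E S (undual x) k"
proof (intro set_eqI iffI)
  fix v assume "v \<in> reach_within (dual ` V) (dE E) (dual ` S) x k"
  then obtain xs where xs: "walk_from_to (dual ` V) (dE E) x v xs" "length xs \<le> Suc k" "set xs \<subseteq> dual ` S"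
    unfolding reach_within_def by blast
  have "walk_from_to V E (undual x) (undual v) (map undual xs)" using xs(1) by (simp add: wft_dual)
  moreover have "set (map undual xs) \<subseteq> S" using xs(3) by (auto simp: mem_dual_image)
  ultimately have "undual v \<in> reach_within V E S (undual x) k" using xs(2) unfolding reach_within_def
    by (intro CollectI exI[of _ "map undual xs"]) auto
  then show "v \<in> dual ` reach_within V E S (undual x) k" by (metis dual_undual image_eqI)
next
  fix v assume "v \<in> dual ` reach_within V E S (undual x) k"
  then obtain w where w: "v = dual w" "w \<in> reach_within V E S (undual x) k" by blast
  then obtain xs where xs: "walk_from_to V E (undual x) w xs" "length xs \<le> Suc k" "set xs \<subseteq> S"
    unfolding reach_within_def by blast
  have "walk_from_to (dual ` V) (dE E) x v (map dual xs)" using xs(1) w(1) by (simp add: wft_dual map_undual_dual)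
  moreover have "set (map dual xs) \<subseteq> dual ` S" using xs(3) by auto
  ultimately show "v \<in> reach_within (dual ` V) (dE E) (dual ` S) x k" using xs(2) unfolding reach_within_def
    by (intro CollectI exI[of _ "map dual xs"]) auto
qed

lemma Min_dual:
  assumes "finite S" "S \<noteq> {}"
  shows "Min (dual ` S) = dual (Max S)"
  using assms by (intro Min_eqI) (auto simp: dual_less_eq_iff)

lemma Max_dual:
  assumes "finite S" "S \<noteq> {}"
  shows "Max (dual ` S) = dual (Min S)"
  using assms by (intro Max_eqI) (auto simp: dual_less_eq_iff)

lemma simple_graph_dual: "simple_graph V E \<Longrightarrow> simple_graph (dual ` V) (dE E)"
  unfolding simple_graph_def dE_def by (auto simp: mem_dual_image)

lemma X_property_dual:
  assumes "simple_graph V E" "X_property V E"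
  shows "X_property (dual ` V) (dE E)"
  unfolding X_property_def dE_def
proof (intro ballI impI)
  fix p q r s :: "'a dual"
  assume V: "p \<in> dual ` V" "q \<in> dual ` V" "r \<in> dual ` V" "s \<in> dual ` V"
    and h: "p < q \<and> q < r \<and> r < s \<and> E (undual p) (undual r) \<and> E (undual q) (undual s)"
  have sym: "\<And>u v. E u v \<Longrightarrow> E v u" using assms(1) by (simp add: simple_graph_def)
  have "undual s < undual r" "undual r < undual q" "undual q < undual p" using h by (auto simp: dual_less_iff)
  moreover have "E (undual s) (undual q)" "E (undual r) (undual p)" using h sym by auto
  ultimately have "E (undual s) (undual p)" using assms(2) V unfolding X_property_def mem_dual_image by blast
  then show "E (undual p) (undual s)" using sym by blast
qed

lemma wft_dual_rev:
  assumes sym: "\<And>u v. E u v \<Longrightarrow> E v u"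
  shows "walk_from_to (dual ` V) (dE E) (dual t) (dual s) (map dual (rev xs)) \<longleftrightarrow> walk_from_to V E s t xs"
proof -
  have "walk_from_to (dual ` V) (dE E) (dual t) (dual s) (map dual (rev xs)) \<longleftrightarrow> walk_from_to V E t s (rev xs)"
    by (simp add: wft_dual map_undual_dual)
  also have "\<dots> \<longleftrightarrow> walk_from_to V E s t xs" using wft_rev[OF sym, where V=V and x=t and y=s and xs="rev xs"] wft_rev[OF sym, where V=V and x=s and y=t and xs=xs] by auto
  finally show ?thesis .
qed

lemma dual_rev_surj: "ys = map dual (rev (rev (map undual ys)))"
  by (simp add: rev_map[symmetric] map_dual_undual)

lemma dist_dual_rev:
  assumes sym: "\<And>u v. E u v \<Longrightarrow> E v u"
  shows "dist (dual ` V) (dE E) (dual t) (dual s) = dist V E s t"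
  unfolding dist_def
proof (rule arg_cong[where f = Least], rule ext)
  fix n
  show "(\<exists>xs. walk_from_to (dual ` V) (dE E) (dual t) (dual s) xs \<and> length xs = Suc n) =
        (\<exists>xs. walk_from_to V E s t xs \<and> length xs = Suc n)"
  proof
    assume "\<exists>xs. walk_from_to (dual ` V) (dE E) (dual t) (dual s) xs \<and> length xs = Suc n"
    then obtain ys where ys: "walk_from_to (dual ` V) (dE E) (dual t) (dual s) ys" "length ys = Suc n" by blast
    then have "walk_from_to V E s t (rev (map undual ys))"
      using wft_dual_rev[OF sym, where V=V and s=s and t=t and xs="rev (map undual ys)"] dual_rev_surj[of ys] by simp
    then show "\<exists>xs. walk_from_to V E s t xs \<and> length xs = Suc n" using ys(2) by (intro exI[of _ "rev (map undual ys)"]) simp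
  next
    assume "\<exists>xs. walk_from_to V E s t xs \<and> length xs = Suc n"
    then obtain xs where "walk_from_to V E s t xs" "length xs = Suc n" by blast
    then show "\<exists>xs. walk_from_to (dual ` V) (dE E) (dual t) (dual s) xs \<and> length xs = Suc n"
      using wft_dual_rev[OF sym, where V=V and s=s and t=t and xs=xs] by (intro exI[of _ "map dual (rev xs)"]) simp
  qed
qed

lemma set_dual_rev: "set (map dual (rev xs)) = dual ` set xs" by simp

lemma righti_dual_rev:
  assumes "distinct xs" "xs \<noteq> []"
  shows "righti (map dual (rev xs)) = length xs - 1 - lefti xs"
proof (rule righti_eq)
  show "distinct (map dual (rev xs))" using assms by (simp add: distinct_map inj_on_def)
  have l: "lefti xs < length xs" "xs ! lefti xs = Min (set xs)" using lefti_prop[OF assms(2)] by auto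
  show "length xs - 1 - lefti xs < length (map dual (rev xs))" using l by simp
  have "map dual (rev xs) ! (length xs - 1 - lefti xs) = dual (xs ! lefti xs)"
    using l by (simp add: rev_nth)
  also have "\<dots> = Max (set (map dual (rev xs)))" using l assms by (simp add: Max_dual)
  finally show "map dual (rev xs) ! (length xs - 1 - lefti xs) = Max (set (map dual (rev xs)))" .
qed

lemma lefti_dual_rev:
  assumes "distinct xs" "xs \<noteq> []"
  shows "lefti (map dual (rev xs)) = length xs - 1 - righti xs"
proof (rule lefti_eq)
  show "distinct (map dual (rev xs))" using assms by (simp add: distinct_map inj_on_def)
  have l: "righti xs < length xs" "xs ! righti xs = Max (set xs)" using righti_prop[OF assms(2)] by auto
  show "length xs - 1 - righti xs < length (map dual (rev xs))" using l by simp
  have "map dual (rev xs) ! (length xs - 1 - righti xs) = dual (xs ! righti xs)"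
    using l by (simp add: rev_nth)
  also have "\<dots> = Min (set (map dual (rev xs)))" using l assms by (simp add: Min_dual)
  finally show "map dual (rev xs) ! (length xs - 1 - righti xs) = Min (set (map dual (rev xs)))" .
qed


section \<open>Graphs with the X-property\<close>

locale xg0 =
  fixes V :: "'a::linorder set" and E :: "'a \<Rightarrow> 'a \<Rightarrow> bool"
  assumes sg: "simple_graph V E" and xp: "X_property V E"
begin

lemma sym: "E u v \<Longrightarrow> E v u" using sg by (simp add: simple_graph_def)
lemma edgeV: "E u v \<Longrightarrow> u \<in> V \<and> v \<in> V" using sg by (simp add: simple_graph_def)
lemma finV: "finite V" using sg by (simp add: simple_graph_def)

lemma X:
  assumes "p < q" "q < r" "r < s" "E p r" "E q s" shows "E p s"
proof -
  have V: "p \<in> V" "q \<in> V" "r \<in> V" "s \<in> V" using edgeV assms(4,5) by auto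
  have "p < q \<and> q < r \<and> r < s \<and> E p r \<and> E q s \<longrightarrow> E p s"
    using bspec[OF bspec[OF bspec[OF bspec[OF xp[unfolded X_property_def] V(1)] V(2)] V(3)] V(4)] .
  then show ?thesis using assms by blast
qed

lemma XE_above: "y < u \<Longrightarrow> u < x \<Longrightarrow> E y x \<Longrightarrow> E u z \<Longrightarrow> x < z \<Longrightarrow> E y z"
  by (rule X)

lemma XE_below: "y < u \<Longrightarrow> u < x \<Longrightarrow> E y x \<Longrightarrow> E u z \<Longrightarrow> z < y \<Longrightarrow> E z x"
  using X[of z y u x] sym by blast

lemma reach_sub: "reach_within V E S x k \<subseteq> V"
proof
  fix v assume "v \<in> reach_within V E S x k"
  then obtain A where "walk_from_to V E x v A" unfolding reach_within_def by blast
  then show "v \<in> V" using wft_ends[of V E x v A] wft_set[of V E x v A] by blast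
qed

lemma reach_fin: "finite (reach_within V E S x k)"
  by (rule finite_subset[OF reach_sub finV])


lemma reach_mono: "k \<le> k' \<Longrightarrow> reach_within V E S x k \<subseteq> reach_within V E S x k'"
  unfolding reach_within_def by (auto intro: le_trans)

lemma reach_S: "reach_within V E S x k \<subseteq> S"
proof
  fix v assume "v \<in> reach_within V E S x k"
  then obtain A where "walk_from_to V E x v A" "set A \<subseteq> S" unfolding reach_within_def by blast
  then show "v \<in> S" using wft_ends[of V E x v A] by blast
qed

lemma reachI: "walk_from_to V E x v A \<Longrightarrow> length A \<le> Suc k \<Longrightarrow> set A \<subseteq> S \<Longrightarrow> v \<in> reach_within V E S x k"
  unfolding reach_within_def by blast

lemma reach_self: "x \<in> V \<Longrightarrow> x \<in> S \<Longrightarrow> x \<in> reach_within V E S x k"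
  by (rule reachI[OF wft_single]) auto

lemma NR:
  assumes nr: "\<forall>A. walk_from_to V E x v A \<longrightarrow> Suc (Suc k) \<le> length A"
    and W: "walk_from_to V E x w W" "length W \<le> Suc k" and j: "Suc j < length W"
  shows "\<not> E (W ! j) v"
proof
  assume e: "E (W ! j) v"
  have w: "walk V E W" "W ! 0 = x" using W(1) by (auto simp: wft_def2)
  have "walk_from_to V E x (W ! j) (take (Suc j) W)" using wft_take[OF w(1), of j] j w(2) by simp
  moreover have "walk_from_to V E v v [v]" using edgeV[OF e] by (simp add: wft_single)
  ultimately have "walk_from_to V E x v (take (Suc j) W @ [v])" using e wft_join_edge by fast
  then have "Suc (Suc k) \<le> length (take (Suc j) W @ [v])" using nr by blast
  then show False using j W(2) by simp
qed

lemma LB: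
  assumes xV: "x \<in> V" and xS: "x \<in> S"
    and u: "u \<in> reach_within V E S x k" and uv: "E u v"
    and big: "Max (reach_within V E S x k) < v"
    and nr: "\<forall>A. walk_from_to V E x v A \<longrightarrow> Suc (Suc k) \<le> length A"
  shows "E (Min (reach_within V E S x k)) v \<or> E (Max (reach_within V E S x k)) v"
proof -
  let ?R = "reach_within V E S x k"
  define a where "a = Min ?R"
  define b where "b = Max ?R"
  have fin: "finite ?R" by (rule reach_fin)
  have ne: "?R \<noteq> {}" using u by blast
  have aR: "a \<in> ?R" and bR: "b \<in> ?R" using fin ne by (auto simp: a_def b_def)
  have au: "a \<le> u" and ub: "u \<le> b" using fin u by (auto simp: a_def b_def)
  have bv: "b < v" using big by (simp add: b_def)
  show ?thesis
  proof (cases "u = a \<or> u = b")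
    case True then show ?thesis using uv by (auto simp: a_def b_def)
  next
    case False
    then have au': "a < u" and ub': "u < b" using au ub by auto
    obtain Wb where Wb: "walk_from_to V E x b Wb" "length Wb \<le> Suc k" "set Wb \<subseteq> S"
      using bR unfolding reach_within_def by blast
    obtain Wa where Wa: "walk_from_to V E x a Wa" "length Wa \<le> Suc k" "set Wa \<subseteq> S"
      using aR unfolding reach_within_def by blast
    have wb: "walk V E Wb" "Wb ! 0 = x" "Wb ! (length Wb - 1) = b" "0 < length Wb"
      using Wb(1) by (auto simp: wft_def2 walk_def)
    have wa: "walk V E Wa" "Wa ! 0 = x" "Wa ! (length Wa - 1) = a" "0 < length Wa"
      using Wa(1) by (auto simp: wft_def2 walk_def)
    have Rle: "\<And>w. w \<in> ?R \<Longrightarrow> w \<le> b" using fin by (simp add: b_def)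
    have WbR: "\<And>i. i < length Wb \<Longrightarrow> Wb ! i \<in> ?R"
    proof -
      fix i assume i: "i < length Wb"
      have "walk_from_to V E x (Wb ! i) (take (Suc i) Wb)" using wft_take[OF wb(1) i] wb(2) by simp
      moreover have "set (take (Suc i) Wb) \<subseteq> S" using Wb(3) by (meson order_trans set_take_subset)
      ultimately show "Wb ! i \<in> ?R" using Wb(2) by (intro reachI) auto
    qed
    have WaR: "\<And>i. i < length Wa \<Longrightarrow> Wa ! i \<in> ?R"
    proof -
      fix i assume i: "i < length Wa"
      have "walk_from_to V E x (Wa ! i) (take (Suc i) Wa)" using wft_take[OF wa(1) i] wa(2) by simp
      moreover have "set (take (Suc i) Wa) \<subseteq> S" using Wa(3) by (meson order_trans set_take_subset)
      ultimately show "Wa ! i \<in> ?R" using Wa(2) by (intro reachI) auto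
    qed
    consider "x < u" | "u < x" | "u = x" by fastforce
    then show ?thesis
    proof cases
      case 1
      have "\<not> (Wb ! (length Wb - 1) < u)" using wb ub' by simp
      from step_exists[where g="(!) Wb" and Q="\<lambda>y. y < u", OF _ this, of 0] obtain j where
        j: "j < length Wb - 1" "Wb ! j < u" "\<not> Wb ! Suc j < u" using wb 1 by auto
      have e: "E (Wb ! j) (Wb ! Suc j)" using wb(1) j(1) walk_edge by fastforce
      show ?thesis
      proof (cases "Wb ! Suc j = u")
        case True
        have "Suc j \<noteq> length Wb - 1" using True wb(3) ub' by auto
        then have "Suc (Suc j) < length Wb" using j(1) by simp
        then show ?thesis using NR[OF nr Wb(1,2)] True uv by blast
      next
        case False
        then have "u < Wb ! Suc j" using j(3) by simp
        moreover have "Wb ! Suc j < v"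
        proof -
          have "Suc j < length Wb" using j(1) by simp
          then show ?thesis using Rle[OF WbR[of "Suc j"]] bv by (meson le_less_trans)
        qed
        ultimately have "E (Wb ! j) v" using X[OF j(2)] e uv by blast
        then show ?thesis using NR[OF nr Wb(1,2), of j] j(1) by simp
      qed
    next
      case 2
      have "\<not> (u < Wa ! (length Wa - 1))" using wa au' by simp
      from step_exists[where g="(!) Wa" and Q="\<lambda>y. u < y", OF _ this, of 0] obtain j where
        j: "j < length Wa - 1" "u < Wa ! j" "\<not> u < Wa ! Suc j" using wa 2 by auto
      have e: "E (Wa ! Suc j) (Wa ! j)" using wa(1) j(1) walk_edge sym by fastforce
      show ?thesis
      proof (cases "Wa ! Suc j = u")
        case True
        have "Suc j \<noteq> length Wa - 1" using True wa(3) au' by auto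
        then have "Suc (Suc j) < length Wa" using j(1) by simp
        then show ?thesis using NR[OF nr Wa(1,2)] True uv by blast
      next
        case False
        then have lt: "Wa ! Suc j < u" using j(3) by simp
        moreover have "Wa ! j < v"
        proof -
          have "j < length Wa" using j(1) by simp
          then show ?thesis using Rle[OF WaR[of j]] bv by (meson le_less_trans)
        qed
        ultimately have ev: "E (Wa ! Suc j) v" using X[OF lt j(2)] e uv by blast
        show ?thesis
        proof (cases "Suc j = length Wa - 1")
          case True
          then show ?thesis using ev wa(3) by (simp add: a_def)
        next
          case False
          then have "Suc (Suc j) < length Wa" using j(1) by simp
          then show ?thesis using NR[OF nr Wa(1,2), of "Suc j"] ev by simp
        qed
      qed
    next
      case 3
      have "walk_from_to V E x v [x, v]" using uv 3 edgeV[OF uv]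
        by (simp add: walk_from_to_def walk_def less_Suc_eq)
      then have "k = 0" using nr by fastforce
      have "?R \<subseteq> {x}"
      proof
        fix w assume "w \<in> ?R"
        then obtain W where "walk_from_to V E x w W" "length W \<le> Suc k" unfolding reach_within_def by blast
        then show "w \<in> {x}" using \<open>k = 0\<close> by (cases W) (auto simp: walk_from_to_def walk_def)
      qed
      then have "a = b" using aR bR by blast
      then show ?thesis using au' ub' by simp
    qed
  qed
qed

lemma LB_dual:
  assumes xV: "x \<in> V" and xS: "x \<in> S"
    and u: "u \<in> reach_within V E S x k" and uv: "E u v"
    and small: "v < Min (reach_within V E S x k)"
    and nr: "\<forall>A. walk_from_to V E x v A \<longrightarrow> Suc (Suc k) \<le> length A"
  shows "E (Min (reach_within V E S x k)) v \<or> E (Max (reach_within V E S x k)) v"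
proof -
  interpret D: xg0 "dual ` V" "dE E"
    using simple_graph_dual[OF sg] X_property_dual[OF sg xp] by unfold_locales
  let ?R = "reach_within V E S x k"
  have R: "reach_within (dual ` V) (dE E) (dual ` S) (dual x) k = dual ` ?R"
    using reach_dual[of V E S "dual x" k] by simp
  have fin: "finite ?R" by (rule reach_fin)
  have ne: "?R \<noteq> {}" using u by blast
  have "dE E (Min (dual ` ?R)) (dual v) \<or> dE E (Max (dual ` ?R)) (dual v)"
  proof (rule D.LB[where u="dual u", of "dual x" "dual ` S" k, unfolded R])
    show "dual x \<in> dual ` V" "dual x \<in> dual ` S" "dual u \<in> dual ` ?R" using xV xS u by auto
    show "dE E (dual u) (dual v)" using uv by (simp add: dE_def)
    show "Max (dual ` ?R) < dual v" using small fin ne by (simp add: Max_dual)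
    show "\<forall>A. walk_from_to (dual ` V) (dE E) (dual x) (dual v) A \<longrightarrow> Suc (Suc k) \<le> length A"
      using nr by (auto simp: wft_dual)
  qed
  then show ?thesis using fin ne by (auto simp: Max_dual Min_dual dE_def)
qed

end

locale xg = xg0 +
  fixes s t :: "'a::linorder"
  assumes sV: "s \<in> V" and tV: "t \<in> V" and st: "s < t"
    and conn: "\<exists>xs. walk_from_to V E s t xs"
begin

abbreviation "d \<equiv> dist V E s t"

definition geo :: "'a list \<Rightarrow> bool" where
  "geo P \<longleftrightarrow> walk_from_to V E s t P \<and> length P = Suc d"

abbreviation "Rs k \<equiv> reach_within V E {v. v \<le> t} s k"

lemma dist_le:
  assumes "walk_from_to V E s t A" shows "Suc d \<le> length A"
proof -
  have "0 < length A" using wft_length[OF assms] .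
  then have "\<exists>xs. walk_from_to V E s t xs \<and> length xs = Suc (length A - 1)" using assms by auto
  then have "d \<le> length A - 1" unfolding dist_def by (rule Least_le)
  then show ?thesis using \<open>0 < length A\<close> by arith
qed

lemma geo_ex: "\<exists>P. geo P"
proof -
  obtain A where A: "walk_from_to V E s t A" using conn by blast
  then have "\<exists>n. \<exists>xs. walk_from_to V E s t xs \<and> length xs = Suc n"
    using wft_length[OF A] by (intro exI[of _ "length A - 1"] exI[of _ A]) simp
  then have "\<exists>xs. walk_from_to V E s t xs \<and> length xs = Suc d" unfolding dist_def by (rule LeastI_ex)
  then show ?thesis unfolding geo_def by blast
qed

lemma geoD:
  assumes "geo P"
  shows "walk V E P" "P ! 0 = s" "P ! d = t" "length P = Suc d" "walk_from_to V E s t P"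
proof -
  have w: "walk_from_to V E s t P" "length P = Suc d" using assms unfolding geo_def by auto
  have l: "length P - 1 = d" using w(2) by simp
  have h: "walk V E P" "P ! 0 = s" "P ! (length P - 1) = t" using w(1) unfolding wft_def2 by auto
  show "walk V E P" "P ! 0 = s" "length P = Suc d" "walk_from_to V E s t P" using h w by auto
  show "P ! d = t" using h(3) unfolding l .
qed

lemma geo_distinct:
  assumes "geo P" shows "distinct P"
proof (rule ccontr)
  assume "\<not> distinct P"
  then obtain i j where ij: "i < j" "j < length P" "P ! i = P ! j"
    by (metis distinct_conv_nth linorder_neqE_nat)
  note g = geoD[OF assms]
  have A: "walk_from_to V E s (P ! i) (take (Suc i) P)" using wft_take[OF g(1), of i] ij g(2) by simp
  have B: "walk_from_to V E (P ! j) t (drop j P)" using wft_drop[OF g(1), of j] ij g(3,4) by simp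
  have "walk_from_to V E s t (take (Suc i) P @ tl (drop j P))" using wft_join[OF A] B ij(3) by simp
  from dist_le[OF this] show False using ij g(4) by simp
qed

lemma SC_eq:
  assumes "geo P" "f \<le> d" "walk_from_to V E s (P ! f) A"
  shows "f < length A"
proof -
  note g = geoD[OF assms(1)]
  have B: "walk_from_to V E (P ! f) t (drop f P)" using wft_drop[OF g(1), of f] assms(2) g(3,4) by simp
  have "walk_from_to V E s t (A @ tl (drop f P))" using wft_join[OF assms(3) B] .
  from dist_le[OF this] show ?thesis using assms(2) g(4) by simp
qed

lemma SC_edge:
  assumes "geo P" "f \<le> d" "walk_from_to V E s u A" "E u (P ! f)"
  shows "f \<le> length A"
proof -
  note g = geoD[OF assms(1)]
  have B: "walk_from_to V E (P ! f) t (drop f P)" using wft_drop[OF g(1), of f] assms(2) g(3,4) by simp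
  have "walk_from_to V E s t (A @ drop f P)" using wft_join_edge[OF assms(3) B assms(4)] .
  from dist_le[OF this] show ?thesis using assms(2) g(4) by simp
qed

lemma SC_pos:
  assumes "geo P" "a \<le> d" "f \<le> d" "E (P ! a) (P ! f)"
  shows "f \<le> Suc a"
proof -
  note g = geoD[OF assms(1)]
  have "walk_from_to V E s (P ! a) (take (Suc a) P)" using wft_take[OF g(1), of a] assms(2) g(2,4) by simp
  from SC_edge[OF assms(1,3) this assms(4)] show ?thesis using assms(2) g(4) by simp
qed

lemma Rs_fin: "finite (Rs k)" by (rule reach_fin)
lemma s_Rs: "s \<in> Rs k" using sV st by (intro reach_self) auto
lemma Rs_ne: "Rs k \<noteq> {}" using s_Rs by blast
lemma Rs_le: "v \<in> Rs k \<Longrightarrow> v \<le> t" using reach_S by blast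

lemma not_Rs:
  assumes "geo P" "f \<le> d" "k < f"
  shows "P ! f \<notin> Rs k"
proof
  assume "P ! f \<in> Rs k"
  then obtain A where "walk_from_to V E s (P ! f) A" "length A \<le> Suc k" unfolding reach_within_def by blast
  with SC_eq[OF assms(1,2)] assms(3) show False by fastforce
qed

lemma pref_Rs:
  assumes "geo P" "i \<le> d" "\<And>j. j \<le> i \<Longrightarrow> P ! j \<le> t"
  shows "P ! i \<in> Rs i"
proof -
  note g = geoD[OF assms(1)]
  have "walk_from_to V E s (P ! i) (take (Suc i) P)" using wft_take[OF g(1), of i] assms(2) g(2,4) by simp
  moreover have "set (take (Suc i) P) \<subseteq> {v. v \<le> t}"
  proof
    fix v assume "v \<in> set (take (Suc i) P)"
    then obtain j where "j < length (take (Suc i) P)" "take (Suc i) P ! j = v" by (metis in_set_conv_nth)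
    then show "v \<in> {v. v \<le> t}" using assms(3)[of j] by simp
  qed
  ultimately show ?thesis by (intro reachI) auto
qed

lemma Max_ge_t: "geo P \<Longrightarrow> t \<le> Max (set P)"
  using geoD[of P] by (metis List.finite_set Max_ge lessI nth_mem)

lemma Min_le_s: "geo P \<Longrightarrow> Min (set P) \<le> s"
  using geoD[of P] by (metis List.finite_set Min_le nth_mem zero_less_Suc)

lemma H1:
  assumes P: "geo P" and j: "j < righti P"
  shows "P ! j \<le> t"
proof (rule ccontr)
  assume "\<not> P ! j \<le> t"
  then have jt: "t < P ! j" by simp
  note g = geoD[OF P]
  have dist: "distinct P" using geo_distinct[OF P] .
  define m where "m = righti P"
  have "P \<noteq> []" using g(4) by auto
  then have mP: "m < length P" "P ! m = Max (set P)" using righti_prop[of P] by (auto simp: m_def)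
  have hmax: "\<And>i. i < length P \<Longrightarrow> P ! i \<le> P ! m" using mP by simp
  have jm: "j < m" using j m_def by simp
  have md: "m \<le> d" using mP g(4) by simp
  have s0: "P ! 0 \<le> t" using g(2) st by simp
  have "\<not> P ! j \<le> t" using jt by simp
  from step_exists[where g="(!) P" and Q="\<lambda>v. v \<le> t", OF s0 this] obtain a where
    a: "0 \<le> a" "a < j" "P ! a \<le> t" "\<not> P ! Suc a \<le> t" by auto
  have "P ! a \<noteq> t" using dist g(3,4) a(2) jm md nth_eq_iff_index_eq[OF dist, of a d] by simp
  then have lo: "P ! a < t" using a(3) by simp
  have hi: "t < P ! Suc a" using a(4) by simp
  have "P ! Suc a \<noteq> P ! m" using nth_eq_iff_index_eq[OF dist, of "Suc a" m] a(2) jm mP(1) by simp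
  then have hiM: "P ! Suc a < P ! m" using hmax[of "Suc a"] a(2) jm mP(1) by simp
  have q1: "\<not> (P ! a < P ! m \<and> P ! m < P ! Suc a)" using hiM less_asym by blast
  have q2: "\<not> \<not> (P ! a < P ! d \<and> P ! d < P ! Suc a)" using lo hi g(3) by simp
  from step_exists[where g="(!) P" and Q="\<lambda>v. \<not> (P ! a < v \<and> v < P ! Suc a)", OF q1 q2 md]
  obtain c where c: "m \<le> c" "c < d" "\<not> (P ! a < P ! c \<and> P ! c < P ! Suc a)"
      "P ! a < P ! Suc c \<and> P ! Suc c < P ! Suc a" by blast
  have ne1: "P ! c \<noteq> P ! a" using nth_eq_iff_index_eq[OF dist, of c a] c(1,2) jm a(2) g(4) by simp
  have ne2: "P ! c \<noteq> P ! Suc a" using nth_eq_iff_index_eq[OF dist, of c "Suc a"] c(1,2) jm a(2) g(4) by simp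
  have eA: "E (P ! a) (P ! Suc a)" using walk_edge[OF g(1), of a] a(2) jm mP(1) by simp
  have eC: "E (P ! Suc c) (P ! c)" using walk_edge[OF g(1), of c] c(2) g(4) sym by simp
  consider "P ! Suc a < P ! c" | "P ! c < P ! a" using c(3) ne1 ne2 by fastforce
  then show False
  proof cases
    case 1
    have "E (P ! a) (P ! c)" using XE_above[OF _ _ eA eC 1] c(4) by blast
    then have "c \<le> Suc a" using SC_pos[OF P, of a c] a(2) jm md c(2) by simp
    then show False using c(1) jm a(2) by simp
  next
    case 2
    have "E (P ! c) (P ! Suc a)" using XE_below[OF _ _ eA eC 2] c(4) by blast
    then have "E (P ! Suc a) (P ! c)" using sym by blast
    then have "c \<le> Suc (Suc a)" using SC_pos[OF P, of "Suc a" c] a(2) jm md c(2) by simp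
    moreover have "c \<noteq> m" using 2 hiM lo hi by auto
    ultimately show False using c(1) jm a(2) by simp
  qed
qed

lemma W_prefix:
  assumes "walk_from_to V E s w W" "j < length W"
  shows "walk_from_to V E s (W ! j) (take (Suc j) W)" "length (take (Suc j) W) = Suc j"
proof -
  have "walk V E W" "W ! 0 = s" using assms(1) by (auto simp: wft_def2)
  then show "walk_from_to V E s (W ! j) (take (Suc j) W)" using wft_take[of V E W j] assms(2) by simp
  show "length (take (Suc j) W) = Suc j" using assms(2) by simp
qed

lemma H4:
  assumes P: "geo P" and li: "lefti P < i" and im: "i < righti P" and wR: "w \<in> Rs i"
  shows "w \<le> P ! i"
proof (rule ccontr)
  assume "\<not> w \<le> P ! i"
  then have iw: "P ! i < w" by simp
  note g = geoD[OF P]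
  have dist: "distinct P" using geo_distinct[OF P] .
  have Pne: "P \<noteq> []" using g(4) by auto
  define m where "m = righti P"
  define l where "l = lefti P"
  have mP: "m < length P" "P ! m = Max (set P)" using righti_prop[OF Pne] by (auto simp: m_def)
  have lP: "l < length P" "P ! l = Min (set P)" using lefti_prop[OF Pne] by (auto simp: l_def)
  have hmax: "\<And>k. k < length P \<Longrightarrow> P ! k \<le> P ! m" using mP by simp
  have hmin: "\<And>k. k < length P \<Longrightarrow> P ! l \<le> P ! k" using lP by simp
  have neq: "\<And>a b. a < length P \<Longrightarrow> b < length P \<Longrightarrow> a \<noteq> b \<Longrightarrow> P ! a \<noteq> P ! b"
    using nth_eq_iff_index_eq[OF dist] by blast
  have md: "m \<le> d" using mP g(4) by simp
  have im': "i < m" and li': "l < i" using im li by (auto simp: m_def l_def)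
  obtain W where W: "walk_from_to V E s w W" "length W \<le> Suc i" "set W \<subseteq> {v. v \<le> t}"
    using wR unfolding reach_within_def by blast
  have w: "walk V E W" "W ! 0 = s" "W ! (length W - 1) = w" "0 < length W"
    using W(1) by (auto simp: wft_def2 walk_def)
  have Wt: "\<And>k. k < length W \<Longrightarrow> W ! k \<le> t" using W(3) nth_mem by fastforce
  have factA: "\<And>f. i < f \<Longrightarrow> f \<le> d \<Longrightarrow> P ! f \<noteq> w" using not_Rs[OF P] wR by blast
  have wt: "w \<le> t" using Rs_le[OF wR] .
  have tM: "t \<le> P ! m" using Max_ge_t[OF P] mP by simp
  have wM: "w < P ! m" using factA[of m] im' md wt tM by fastforce
  have q1: "\<not> w < P ! i" using iw less_asym by blast
  from step_exists[where g="(!) P" and Q="\<lambda>v. \<not> w < v", OF q1 _ ] wM im'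
  obtain e where e: "i \<le> e" "e < m" "\<not> w < P ! e" "w < P ! Suc e" by force
  have ed: "Suc e \<le> d" using e md by simp
  have yw: "P ! e < w"
  proof -
    have "P ! e \<noteq> w" using factA[of e] iw e(1) ed by (cases "e = i") auto
    then show ?thesis using e(3) by simp
  qed
  have eyx: "E (P ! e) (P ! Suc e)" using walk_edge[OF g(1), of e] ed g(4) by simp
  have s_out: "s < P ! e \<or> P ! Suc e < s"
  proof -
    have "s \<noteq> P ! e" using neq[of 0 e] g(2,4) e(1) li' ed by simp
    moreover have "s \<noteq> P ! Suc e" using neq[of 0 "Suc e"] g(2,4) ed by simp
    moreover have "\<not> (P ! e < s \<and> s < P ! Suc e)"
    proof
      assume in1: "P ! e < s \<and> s < P ! Suc e"
      have Ll: "P ! l < P ! e" using hmin[of e] neq[of l e] ed g(4) lP(1) li' e(1) by fastforce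
      have q1: "P ! e < P ! 0 \<and> P ! 0 < P ! Suc e" using in1 g(2) by simp
      have q2: "\<not> (P ! e < P ! l \<and> P ! l < P ! Suc e)" using Ll less_asym by blast
      from step_exists[where g="(!) P" and Q="\<lambda>v. P ! e < v \<and> v < P ! Suc e", OF q1 q2]
      obtain h where h: "h < l" "P ! e < P ! h \<and> P ! h < P ! Suc e" "\<not> (P ! e < P ! Suc h \<and> P ! Suc h < P ! Suc e)"
        by auto
      have hd: "Suc h \<le> d" using h(1) lP(1) g(4) by simp
      have z1: "P ! Suc h \<noteq> P ! e" using neq[of "Suc h" e] h(1) li' e(1) ed g(4) by simp
      have z2: "P ! Suc h \<noteq> P ! Suc e" using neq[of "Suc h" "Suc e"] h(1) li' e(1) ed g(4) by simp
      have eh: "E (P ! h) (P ! Suc h)" using walk_edge[OF g(1), of h] hd g(4) by simp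
      consider "P ! Suc e < P ! Suc h" | "P ! Suc h < P ! e" using h(3) z1 z2 by fastforce
      then show False
      proof cases
        case 1
        have "E (P ! e) (P ! Suc h)" using XE_above[OF _ _ eyx eh 1] h(2) by blast
        then have E2: "E (P ! Suc h) (P ! e)" using sym by blast
        have "e \<le> Suc (Suc h)" using SC_pos[OF P hd _ E2] ed by simp
        moreover have "Suc h \<noteq> l"
        proof
          assume "Suc h = l"
          then have "P ! Suc h \<le> P ! e" using hmin[of e] ed g(4) by simp
          then show False using 1 eyx h(2) less_asym
            by (meson dual_order.strict_trans2 order.strict_trans)
        qed
        ultimately show False using h(1) li' e(1) by simp
      next
        case 2
        have "E (P ! Suc h) (P ! Suc e)" using XE_below[OF _ _ eyx eh 2] h(2) by blast
        then have "Suc e \<le> Suc (Suc h)" using SC_pos[OF P hd ed] by simp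
        then show False using h(1) li' e(1) by simp
      qed
    qed
    ultimately show ?thesis by fastforce
  qed
  have q1: "\<not> (P ! e < W ! 0 \<and> W ! 0 < P ! Suc e)" using s_out w(2) less_asym by blast
  have q2: "\<not> \<not> (P ! e < W ! (length W - 1) \<and> W ! (length W - 1) < P ! Suc e)" using w(3) yw e(4) by simp
  from step_exists[where g="(!) W" and Q="\<lambda>v. \<not> (P ! e < v \<and> v < P ! Suc e)", OF q1 q2]
  obtain j where j: "j < length W - 1" "\<not> (P ! e < W ! j \<and> W ! j < P ! Suc e)"
    "P ! e < W ! Suc j \<and> W ! Suc j < P ! Suc e" by auto
  have jW: "j < length W" "Suc j < length W" using j(1) by auto
  note Wj = W_prefix[OF W(1) jW(1)]
  have jle: "Suc j \<le> i" using j(1) W(2) by simp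
  have z1: "W ! j \<noteq> P ! e"
  proof
    assume a: "W ! j = P ! e"
    have "e < length (take (Suc j) W)" using SC_eq[OF P _ Wj(1)[unfolded a]] ed by simp
    then show False using Wj(2) jle e(1) by simp
  qed
  have z2: "W ! j \<noteq> P ! Suc e"
  proof
    assume a: "W ! j = P ! Suc e"
    have "Suc e < length (take (Suc j) W)" using SC_eq[OF P ed Wj(1)[unfolded a]] by simp
    then show False using Wj(2) jle e(1) by simp
  qed
  have ew: "E (W ! Suc j) (W ! j)" using walk_edge[OF w(1) jW(2)] sym by blast
  consider "W ! j < P ! e" | "P ! Suc e < W ! j" using j(2) z1 z2 by fastforce
  then show False
  proof cases
    case 1
    have "E (W ! j) (P ! Suc e)" using XE_below[OF _ _ eyx ew 1] j(3) by blast
    then have "Suc e \<le> Suc j" using SC_edge[OF P ed Wj(1)] Wj(2) by simp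
    then show False using jle e(1) by simp
  next
    case 2
    have "E (P ! e) (W ! j)" using XE_above[OF _ _ eyx ew 2] j(3) by blast
    then have "E (W ! j) (P ! e)" using sym by blast
    then have "e \<le> Suc j" using SC_edge[OF P _ Wj(1)] Wj(2) ed by simp
    then have ei: "e = i" and ji: "Suc j = i" using jle e(1) by auto
    have lenW: "length W = Suc i" using ji j(1) W(2) by simp
    have Wsj: "W ! Suc j = w" using w(3) lenW ji by simp
    define z where "z = W ! j"
    have wz: "E w z" using ew Wsj by (simp add: z_def)
    have xz: "P ! Suc i < z" using 2 ei by (simp add: z_def)
    have zt: "z \<le> t" using Wt[of j] jW by (simp add: z_def)
    have "z \<noteq> P ! m"
    proof
      assume a: "z = P ! m"
      have "m < length (take (Suc j) W)" using SC_eq[OF P md Wj(1)[unfolded z_def[symmetric] a]] by simp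
      then show False using Wj(2) ji im' by simp
    qed
    then have zM: "z < P ! m" using zt tM by simp
    have wx: "w < P ! Suc i" using e(4) ei by simp
    have r1: "w < P ! Suc i \<and> P ! Suc i < z" using wx xz by simp
    have r2: "\<not> (w < P ! m \<and> P ! m < z)" using zM less_asym by blast
    from step_exists[where g="(!) P" and Q="\<lambda>v. w < v \<and> v < z", OF r1 r2] im'
    obtain h where h: "Suc i \<le> h" "h < m" "w < P ! h \<and> P ! h < z" "\<not> (w < P ! Suc h \<and> P ! Suc h < z)"
      by auto
    have hd: "Suc h \<le> d" using h(2) md by simp
    have y1: "P ! Suc h \<noteq> w" using factA[of "Suc h"] h(1) hd by simp
    have y2: "P ! Suc h \<noteq> z"
    proof
      assume a: "P ! Suc h = z"
      have "Suc h < length (take (Suc j) W)" using SC_eq[OF P hd Wj(1)[unfolded z_def[symmetric] a[symmetric]]] by simp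
      then show False using Wj(2) ji h(1) by simp
    qed
    have eh: "E (P ! h) (P ! Suc h)" using walk_edge[OF g(1), of h] hd g(4) by simp
    consider "z < P ! Suc h" | "P ! Suc h < w" using h(4) y1 y2 by fastforce
    then show False
    proof cases
      case 1
      have "E w (P ! Suc h)" using XE_above[OF _ _ wz eh 1] h(3) by blast
      then have "Suc h \<le> length W" using SC_edge[OF P hd W(1)] by simp
      then show False using lenW h(1) by simp
    next
      case 2
      have "E (P ! Suc h) z" using XE_below[OF _ _ wz eh 2] h(3) by blast
      then have "E z (P ! Suc h)" using sym by blast
      then have "Suc h \<le> Suc j" using SC_edge[OF P hd Wj(1)] Wj(2) by (simp add: z_def)
      then show False using ji h(1) by simp
    qed
  qed
qed

definition hyp_s :: "'a list \<Rightarrow> bool" where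
  "hyp_s P \<longleftrightarrow> (\<forall>P'. geo P' \<and> Max (set P') = Max (set P) \<longrightarrow> Min (set P) \<le> Min (set P'))"

lemma H7:
  assumes P: "geo P" and kl: "k \<le> lefti P" and wR: "w \<in> Rs k"
    and alt: "k < lefti P \<or> (hyp_s P \<and> lefti P < righti P)"
  shows "Min (set P) \<le> w"
proof (rule ccontr)
  assume "\<not> Min (set P) \<le> w"
  then have wL: "w < Min (set P)" by simp
  note g = geoD[OF P]
  have dist: "distinct P" using geo_distinct[OF P] .
  have Pne: "P \<noteq> []" using g(4) by auto
  define l where "l = lefti P"
  have lP: "l < length P" "P ! l = Min (set P)" using lefti_prop[OF Pne] by (auto simp: l_def)
  have ld: "l \<le> d" using lP(1) g(4) by simp
  have hmin: "\<And>k. k < length P \<Longrightarrow> P ! l \<le> P ! k" using lP by simp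
  obtain W where W: "walk_from_to V E s w W" "length W \<le> Suc k" "set W \<subseteq> {v. v \<le> t}"
    using wR unfolding reach_within_def by blast
  have kl': "k \<le> l" using kl by (simp add: l_def)
  have w: "walk V E W" "W ! 0 = s" "W ! (length W - 1) = w" "0 < length W"
    using W(1) by (auto simp: wft_def2 walk_def)
  have Wt: "\<And>k. k < length W \<Longrightarrow> W ! k \<le> t" using W(3) nth_mem by fastforce
  have q1: "P ! l \<le> W ! 0" using hmin[of 0] g(2,4) w(2) by simp
  have q2: "\<not> P ! l \<le> W ! (length W - 1)" using w(3) wL lP(2) by simp
  from step_exists[where g="(!) W" and Q="\<lambda>v. P ! l \<le> v", OF q1 q2]
  obtain j where j: "j < length W - 1" "P ! l \<le> W ! j" "\<not> P ! l \<le> W ! Suc j" by auto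
  have jW: "j < length W" "Suc j < length W" using j(1) by auto
  note Wj = W_prefix[OF W(1) jW(1)]
  note Wj1 = W_prefix[OF W(1) jW(2)]
  have jk: "Suc j \<le> k" using j(1) W(2) by simp
  have jl: "Suc j \<le> l" using jk kl' by simp
  have xL: "P ! l < W ! j"
  proof -
    have "W ! j \<noteq> P ! l"
    proof
      assume a: "W ! j = P ! l"
      have "l < length (take (Suc j) W)" using SC_eq[OF P ld Wj(1)[unfolded a]] by simp
      then show False using Wj(2) jl by simp
    qed
    then show ?thesis using j(2) by simp
  qed
  have yL: "W ! Suc j < P ! l" using j(3) by simp
  have exy: "E (W ! Suc j) (W ! j)" using walk_edge[OF w(1) jW(2)] sym by blast
  have xt: "W ! j < t"
  proof -
    have "W ! j \<noteq> t"
    proof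
      assume a: "W ! j = t"
      have "walk_from_to V E s (P ! d) (take (Suc j) W)" using Wj(1) a g(3) by simp
      then have "d < length (take (Suc j) W)" by (rule SC_eq[OF P order.refl])
      then show False using Wj(2) jl ld by simp
    qed
    then show ?thesis using Wt[OF jW(1)] by simp
  qed
  have r1: "W ! Suc j < P ! l \<and> P ! l < W ! j" using xL yL by simp
  have r2: "\<not> (W ! Suc j < P ! d \<and> P ! d < W ! j)" unfolding g(3) using xt less_asym by blast
  from step_exists[where g="(!) P" and Q="\<lambda>v. W ! Suc j < v \<and> v < W ! j", OF r1 r2 ld]
  obtain h where h: "l \<le> h" "h < d" "W ! Suc j < P ! h \<and> P ! h < W ! j" "\<not> (W ! Suc j < P ! Suc h \<and> P ! Suc h < W ! j)"
    by auto
  have hd: "Suc h \<le> d" using h(2) by simp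
  have y1: "P ! Suc h \<noteq> W ! j"
  proof
    assume a: "P ! Suc h = W ! j"
    have "Suc h < length (take (Suc j) W)" using SC_eq[OF P hd Wj(1)[unfolded a[symmetric]]] by simp
    then show False using Wj(2) jl h(1) by simp
  qed
  have y2: "P ! Suc h \<noteq> W ! Suc j"
  proof
    assume a: "P ! Suc h = W ! Suc j"
    have "Suc h < length (take (Suc (Suc j)) W)" using SC_eq[OF P hd Wj1(1)[unfolded a[symmetric]]] by simp
    then show False using Wj1(2) W(2) jl h(1) j(1) by simp
  qed
  have eh: "E (P ! h) (P ! Suc h)" using walk_edge[OF g(1), of h] hd g(4) by simp
  consider "P ! Suc h < W ! Suc j" | "W ! j < P ! Suc h" using h(4) y1 y2 by fastforce
  then show False
  proof cases
    case 1
    have "E (P ! Suc h) (W ! j)" using XE_below[OF _ _ exy eh 1] h(3) by blast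
    then have "E (W ! j) (P ! Suc h)" using sym by blast
    then have "Suc h \<le> Suc j" using SC_edge[OF P hd Wj(1)] Wj(2) by simp
    then show False using jl h(1) by simp
  next
    case 2
    have ey: "E (W ! Suc j) (P ! Suc h)" using XE_above[OF _ _ exy eh 2] h(3) by blast
    then have "Suc h \<le> Suc (Suc j)" using SC_edge[OF P hd Wj1(1)] Wj1(2) by simp
    then have hl: "h = l" "Suc j = l" using jl h(1) by auto
    have kl2: "k = l" using jk kl' hl by simp
    have hyp: "hyp_s P" and lm: "lefti P < righti P" using alt kl2 by (auto simp: l_def)
    have lenW: "length W = Suc (Suc j)" using hl j(1) W(2) kl2 by simp
    have tW: "take (Suc (Suc j)) W = W" using lenW by simp
    have B: "walk_from_to V E (P ! Suc h) t (drop (Suc h) P)" using wft_drop[OF g(1), of "Suc h"] hd g(3,4) by simp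
    have P'w: "walk_from_to V E s t (W @ drop (Suc h) P)"
      using wft_join_edge[OF Wj1(1)[unfolded tW] B ey] .
    have P'g: "geo (W @ drop (Suc h) P)" unfolding geo_def using P'w lenW hl g(4) hd by simp
    have fin: "finite (set (W @ drop (Suc h) P))" by simp
    have ne: "set (W @ drop (Suc h) P) \<noteq> {}" using w(4) by auto
    have "Max (set (W @ drop (Suc h) P)) \<le> Max (set P)"
    proof (rule Max.boundedI[OF fin ne])
      fix v assume v: "v \<in> set (W @ drop (Suc h) P)"
      have tM: "t \<le> Max (set P)" using Max_ge_t[OF P] .
      show "v \<le> Max (set P)"
      proof (cases "v \<in> set W")
        case True then have "v \<le> t" using W(3) by blast
        then show ?thesis using tM by simp
      next
        case False then have "v \<in> set (drop (Suc h) P)" using v by simp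
        then have "v \<in> set P" by (rule in_set_dropD)
        then show ?thesis by simp
      qed
    qed
    moreover have "Max (set P) \<le> Max (set (W @ drop (Suc h) P))"
    proof -
      have mP: "righti P < length P" "P ! righti P = Max (set P)" using righti_prop[OF Pne] by auto
      have "P ! righti P \<in> set (drop (Suc h) P)"
      proof -
        have "drop (Suc h) P ! (righti P - Suc h) = P ! righti P" using lm hl mP(1) by (simp add: l_def)
        moreover have "righti P - Suc h < length (drop (Suc h) P)" using lm hl mP(1) by (simp add: l_def)
        ultimately show ?thesis by (metis nth_mem)
      qed
      then show ?thesis using mP(2) fin by simp
    qed
    ultimately have "Max (set (W @ drop (Suc h) P)) = Max (set P)" by simp
    then have "Min (set P) \<le> Min (set (W @ drop (Suc h) P))" using hyp P'g unfolding hyp_s_def by blast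
    moreover have "Min (set (W @ drop (Suc h) P)) \<le> W ! Suc j"
    proof (rule Min_le[OF fin])
      show "W ! Suc j \<in> set (W @ drop (Suc h) P)" using nth_mem[OF jW(2)] by simp
    qed
    ultimately show False using yL lP(2) by simp
  qed
qed

lemma Rs_mono: "k \<le> k' \<Longrightarrow> Rs k \<subseteq> Rs k'" by (rule reach_mono)

lemma CC_step:
  assumes P: "geo P" and kd: "Suc k \<le> d" and kR: "P ! k \<in> Rs k"
    and cond: "Max (Rs k) < P ! Suc k \<or> P ! Suc k < Min (Rs k)"
  shows "\<exists>c W. c \<in> {Min (Rs k), Max (Rs k)} \<and> geo (W @ drop (Suc k) P) \<and> walk_from_to V E s c W
     \<and> length W = Suc k \<and> set W \<subseteq> {v. v \<le> t} \<and> E c (P ! Suc k)"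
proof -
  note g = geoD[OF P]
  have nr: "\<forall>A. walk_from_to V E s (P ! Suc k) A \<longrightarrow> Suc (Suc k) \<le> length A"
    using SC_eq[OF P kd] by (simp add: Suc_le_eq)
  have ek: "E (P ! k) (P ! Suc k)" using walk_edge[OF g(1), of k] kd g(4) by simp
  have "E (Min (Rs k)) (P ! Suc k) \<or> E (Max (Rs k)) (P ! Suc k)"
    using cond LB[OF sV _ kR ek _ nr] LB_dual[OF sV _ kR ek _ nr] st by auto
  then obtain c where c: "c \<in> {Min (Rs k), Max (Rs k)}" "E c (P ! Suc k)" by blast
  have cR: "c \<in> Rs k" using c(1) Rs_fin Rs_ne by auto
  then obtain W where W: "walk_from_to V E s c W" "length W \<le> Suc k" "set W \<subseteq> {v. v \<le> t}"
    unfolding reach_within_def by blast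
  have B: "walk_from_to V E (P ! Suc k) t (drop (Suc k) P)" using wft_drop[OF g(1), of "Suc k"] kd g(3,4) by simp
  have Pw: "walk_from_to V E s t (W @ drop (Suc k) P)" using wft_join_edge[OF W(1) B c(2)] .
  have "Suc k \<le> length W" using SC_edge[OF P kd W(1) c(2)] .
  then have lW: "length W = Suc k" using W(2) by simp
  have "geo (W @ drop (Suc k) P)" unfolding geo_def using Pw lW g(4) kd by simp
  then show ?thesis using c W(1,3) lW by blast
qed

lemma CC:
  assumes "geo P" "Suc k \<le> d" "P ! k \<in> Rs k"
    "Max (Rs k) < P ! Suc k \<or> P ! Suc k < Min (Rs k)"
  shows "\<exists>Q. geo Q \<and> drop (Suc k) Q = drop (Suc k) P \<and> (\<forall>i \<le> k. Q ! i \<in> {Min (Rs i), Max (Rs i)})"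
  using assms
proof (induction k arbitrary: P)
  case 0
  from CC_step[OF 0(1-4)] obtain c W where cW: "c \<in> {Min (Rs 0), Max (Rs 0)}" "geo (W @ drop (Suc 0) P)"
    "walk_from_to V E s c W" "length W = Suc 0" by blast
  have "W ! 0 = c" using cW(3,4) unfolding wft_def2 by auto
  then show ?case using cW by (intro exI[of _ "W @ drop (Suc 0) P"]) (auto simp: nth_append)
next
  case (Suc k)
  from CC_step[OF Suc.prems(1-4)] obtain c W where cW: "c \<in> {Min (Rs (Suc k)), Max (Rs (Suc k))}"
    "geo (W @ drop (Suc (Suc k)) P)" "walk_from_to V E s c W" "length W = Suc (Suc k)" "set W \<subseteq> {v. v \<le> t}"
    "E c (P ! Suc (Suc k))" by blast
  define P1 where "P1 = W @ drop (Suc (Suc k)) P"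
  have P1: "geo P1" using cW(2) by (simp add: P1_def)
  have wW: "walk V E W" "W ! 0 = s" "W ! Suc k = c" using cW(3,4) by (auto simp: wft_def2)
  have P1c: "P1 ! Suc k = c" using wW(3) cW(4) by (simp add: P1_def nth_append)
  have P1k: "P1 ! k = W ! k" using cW(4) by (simp add: P1_def nth_append)
  have kd: "Suc k \<le> d" using Suc.prems(2) by simp
  have kR: "P1 ! k \<in> Rs k"
  proof -
    have "walk_from_to V E s (W ! k) (take (Suc k) W)" using W_prefix[OF cW(3), of k] cW(4) by simp
    moreover have "set (take (Suc k) W) \<subseteq> {v. v \<le> t}" using cW(5) by (meson order_trans set_take_subset)
    ultimately show ?thesis using P1k by (intro reachI[of _ _ "take (Suc k) W"]) auto
  qed
  have cnot: "c \<notin> Rs k"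
  proof
    assume "c \<in> Rs k"
    then obtain A where A: "walk_from_to V E s c A" "length A \<le> Suc k" unfolding reach_within_def by blast
    have "Suc (Suc k) \<le> length A" using SC_edge[OF Suc.prems(1,2) A(1) cW(6)] .
    then show False using A(2) by simp
  qed
  have sub: "Rs k \<subseteq> Rs (Suc k)" by (rule Rs_mono) simp
  have cond: "Max (Rs k) < P1 ! Suc k \<or> P1 ! Suc k < Min (Rs k)"
  proof (cases "c = Min (Rs (Suc k))")
    case True
    have "Min (Rs (Suc k)) \<le> Min (Rs k)" using Min_antimono[OF sub Rs_ne Rs_fin] .
    moreover have "Min (Rs k) \<in> Rs k" using Rs_fin Rs_ne by simp
    ultimately have "c < Min (Rs k)" using True cnot by (metis order.not_eq_order_implies_strict)
    then show ?thesis using P1c by simp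
  next
    case False
    then have cm: "c = Max (Rs (Suc k))" using cW(1) by simp
    have "Max (Rs k) \<le> Max (Rs (Suc k))" using Max_mono[OF sub Rs_ne Rs_fin] .
    moreover have "Max (Rs k) \<in> Rs k" using Rs_fin Rs_ne by simp
    ultimately have "Max (Rs k) < c" using cm cnot by (metis order.not_eq_order_implies_strict)
    then show ?thesis using P1c by simp
  qed
  from Suc.IH[OF P1 kd kR cond] obtain Q where Q: "geo Q" "drop (Suc k) Q = drop (Suc k) P1"
    "\<forall>i\<le>k. Q ! i \<in> {Min (Rs i), Max (Rs i)}" by blast
  have lQ: "length Q = Suc d" using geoD(4)[OF Q(1)] .
  have "drop (Suc (Suc k)) Q = drop 1 (drop (Suc k) Q)" by simp
  also have "\<dots> = drop 1 (drop (Suc k) P1)" using Q(2) by simp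
  also have "\<dots> = drop (Suc (Suc k)) P" using cW(4) by (simp add: P1_def)
  finally have dQ: "drop (Suc (Suc k)) Q = drop (Suc (Suc k)) P" .
  have "Q ! Suc k = (drop (Suc k) Q) ! 0" using lQ Suc.prems(2) by simp
  also have "\<dots> = (drop (Suc k) P1) ! 0" using Q(2) by simp
  also have "\<dots> = c" using P1c P1 geoD(4)[OF P1] Suc.prems(2) by simp
  finally have Qc: "Q ! Suc k = c" .
  have "\<forall>i\<le>Suc k. Q ! i \<in> {Min (Rs i), Max (Rs i)}"
  proof (intro allI impI)
    fix i assume "i \<le> Suc k"
    then consider "i \<le> k" | "i = Suc k" by linarith
    then show "Q ! i \<in> {Min (Rs i), Max (Rs i)}"
    proof cases
      case 1 then show ?thesis using Q(3) by blast
    next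
      case 2 then show ?thesis using Qc cW(1) by simp
    qed
  qed
  then show ?case using Q(1) dQ by blast
qed

lemma coreA:
  assumes P: "geo P" and j: "j < righti P"
  shows "P ! j \<in> Rs j"
proof -
  have "righti P \<le> d" using righti_prop[of P] geoD(4)[OF P] by fastforce
  then show ?thesis using pref_Rs[OF P] H1[OF P] j by simp
qed

lemma coreC:
  assumes P: "geo P" and hyp: "hyp_s P" and lm: "lefti P < righti P"
  shows "P ! lefti P = Min (Rs (lefti P))"
proof -
  have Pne: "P \<noteq> []" using geoD(4)[OF P] by auto
  have mem: "P ! lefti P \<in> Rs (lefti P)" using coreA[OF P lm] .
  show ?thesis
  proof (rule Min_eqI[symmetric, OF Rs_fin _ mem])
    fix w assume "w \<in> Rs (lefti P)"
    then show "P ! lefti P \<le> w" using H7[OF P order.refl _] hyp lm lefti_prop[OF Pne] by simp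
  qed
qed

lemma coreB:
  assumes P: "geo P" and li: "lefti P < i" and im: "i < righti P"
  shows "P ! i = Max (Rs i)"
  using Max_eqI[OF Rs_fin H4[OF P li im] coreA[OF P im]] by simp

definition hyp_t :: "'a list \<Rightarrow> bool" where
  "hyp_t P \<longleftrightarrow> (\<forall>Q. geo Q \<and> Min (set Q) = Min (set P) \<longrightarrow> Max (set Q) \<le> Max (set P))"

abbreviation "Rt k \<equiv> reach_within V E {v. s \<le> v} t k"

lemma dual_xg: "xg (dual ` V) (dE E) (dual t) (dual s)"
proof (unfold_locales)
  show "simple_graph (dual ` V) (dE E)" using simple_graph_dual[OF sg] .
  show "X_property (dual ` V) (dE E)" using X_property_dual[OF sg xp] .
  show "dual t \<in> dual ` V" "dual s \<in> dual ` V" using sV tV by auto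
  show "dual t < dual s" using st by simp
  obtain xs where "walk_from_to V E s t xs" using conn by blast
  then show "\<exists>xs. walk_from_to (dual ` V) (dE E) (dual t) (dual s) xs"
    using wft_dual_rev[where E=E, OF sym, where V=V and s=s and t=t and xs=xs] by blast
qed

lemma T_d: "dist (dual ` V) (dE E) (dual t) (dual s) = d"
  by (rule dist_dual_rev[OF sym])

lemma T_set: "{v. v \<le> dual s} = dual ` {v. s \<le> v}"
proof (intro set_eqI iffI)
  fix x :: "'a dual" assume "x \<in> {v. v \<le> dual s}"
  then have "s \<le> undual x" by (simp add: dual_less_eq_iff)
  then show "x \<in> dual ` {v. s \<le> v}" by (metis dual_undual image_eqI mem_Collect_eq)
next
  fix x :: "'a dual" assume "x \<in> dual ` {v. s \<le> v}"
  then show "x \<in> {v. v \<le> dual s}" by auto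
qed

lemma T_Rs: "reach_within (dual ` V) (dE E) {v. v \<le> dual s} (dual t) k = dual ` Rt k"
  unfolding T_set by (simp add: reach_dual)

lemma Rt_fin: "finite (Rt k)" by (rule reach_fin)
lemma Rt_ne: "Rt k \<noteq> {}" using reach_self[of t "{v. s \<le> v}" k] tV less_imp_le[OF st] by auto

lemma T_Min: "Min (dual ` Rt k) = dual (Max (Rt k))" using Min_dual[OF Rt_fin Rt_ne] .
lemma T_Max: "Max (dual ` Rt k) = dual (Min (Rt k))" using Max_dual[OF Rt_fin Rt_ne] .

lemma T_geo: "xg.geo (dual ` V) (dE E) (dual t) (dual s) (map dual (rev P)) \<longleftrightarrow> geo P"
proof -
  interpret D: xg "dual ` V" "dE E" "dual t" "dual s" by (rule dual_xg)
  show ?thesis unfolding D.geo_def geo_def T_d using wft_dual_rev[where E=E, OF sym, where V=V and s=s and t=t and xs=P]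
    by simp
qed

lemma T_geo':
  assumes "xg.geo (dual ` V) (dE E) (dual t) (dual s) Q'"
  shows "geo (rev (map undual Q'))" "Q' = map dual (rev (rev (map undual Q')))"
proof -
  show "Q' = map dual (rev (rev (map undual Q')))" by (rule dual_rev_surj)
  then show "geo (rev (map undual Q'))" using assms T_geo by metis
qed

lemma T_nth:
  assumes "length P = Suc d" "i \<le> d"
  shows "map dual (rev P) ! i = dual (P ! (d - i))"
  using assms by (simp add: rev_nth)

lemma T_righti: "geo P \<Longrightarrow> righti (map dual (rev P)) = d - lefti P"
  using righti_dual_rev[OF geo_distinct] geoD(4) by fastforce

lemma T_lefti: "geo P \<Longrightarrow> lefti (map dual (rev P)) = d - righti P"
  using lefti_dual_rev[OF geo_distinct] geoD(4) by fastforce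

lemma T_MaxP: "Max (set (map dual (rev P))) = dual (Min (set P))" if "P \<noteq> []"
  using Max_dual[of "set P"] that by simp

lemma T_MinP: "Min (set (map dual (rev P))) = dual (Max (set P))" if "P \<noteq> []"
  using Min_dual[of "set P"] that by simp

lemma T_hyp:
  assumes P: "geo P" and h: "hyp_t P"
  shows "xg.hyp_s (dual ` V) (dE E) (dual t) (dual s) (map dual (rev P))"
proof -
  interpret D: xg "dual ` V" "dE E" "dual t" "dual s" by (rule dual_xg)
  have Pne: "P \<noteq> []" using geoD(4)[OF P] by auto
  show ?thesis unfolding D.hyp_s_def
  proof (intro allI impI)
    fix Q' assume a: "D.geo Q' \<and> Max (set Q') = Max (set (map dual (rev P)))"
    define Q where "Q = rev (map undual Q')"
    have Q: "geo Q" "Q' = map dual (rev Q)" using T_geo'[of Q'] a by (auto simp: Q_def)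
    have Qne: "Q \<noteq> []" using geoD(4)[OF Q(1)] by auto
    have "dual (Min (set Q)) = dual (Min (set P))" using a Q(2) T_MaxP[OF Pne] T_MaxP[OF Qne] by simp
    then have "Min (set Q) = Min (set P)" by simp
    then have "Max (set Q) \<le> Max (set P)" using h Q(1) unfolding hyp_t_def by blast
    then show "Min (set (map dual (rev P))) \<le> Min (set Q')" using Q(2) T_MinP[OF Pne] T_MinP[OF Qne] by simp
  qed
qed

lemma tA:
  assumes P: "geo P" and j: "lefti P < j" "j \<le> d"
  shows "P ! j \<in> Rt (d - j)"
proof -
  interpret D: xg "dual ` V" "dE E" "dual t" "dual s" by (rule dual_xg)
  have PD: "D.geo (map dual (rev P))" using T_geo P by simp
  have "d - j < righti (map dual (rev P))" using T_righti[OF P] j by simp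
  from D.coreA[OF PD this] have "map dual (rev P) ! (d - j) \<in> dual ` Rt (d - j)" unfolding T_Rs T_d .
  moreover have "map dual (rev P) ! (d - j) = dual (P ! j)" using T_nth[OF geoD(4)[OF P], of "d - j"] j by simp
  ultimately show ?thesis by (metis image_iff undual_dual)
qed

lemma tB:
  assumes P: "geo P" and li: "lefti P < i" and im: "i < righti P"
  shows "P ! i = Min (Rt (d - i))"
proof -
  interpret D: xg "dual ` V" "dE E" "dual t" "dual s" by (rule dual_xg)
  have PD: "D.geo (map dual (rev P))" using T_geo P by simp
  have md: "righti P \<le> d" using righti_prop[of P] geoD(4)[OF P] by fastforce
  have "lefti (map dual (rev P)) < d - i" "d - i < righti (map dual (rev P))"
    using T_righti[OF P] T_lefti[OF P] li im md by auto
  from D.coreB[OF PD this] have "map dual (rev P) ! (d - i) = dual (Min (Rt (d - i)))"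
    unfolding T_Rs T_d T_Max .
  moreover have "map dual (rev P) ! (d - i) = dual (P ! i)" using T_nth[OF geoD(4)[OF P], of "d - i"] im md by simp
  ultimately show ?thesis by simp
qed

lemma tC:
  assumes P: "geo P" and hyp: "hyp_t P" and lm: "lefti P < righti P"
  shows "P ! righti P = Max (Rt (d - righti P))"
proof -
  interpret D: xg "dual ` V" "dE E" "dual t" "dual s" by (rule dual_xg)
  have PD: "D.geo (map dual (rev P))" using T_geo P by simp
  have md: "righti P \<le> d" using righti_prop[of P] geoD(4)[OF P] by fastforce
  have "lefti (map dual (rev P)) < righti (map dual (rev P))"
    using T_righti[OF P] T_lefti[OF P] lm md by auto
  from D.coreC[OF PD T_hyp[OF P hyp] this]
  have "map dual (rev P) ! (d - righti P) = dual (Max (Rt (d - righti P)))"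
    unfolding T_lefti[OF P] T_Rs T_d T_Min .
  moreover have "map dual (rev P) ! (d - righti P) = dual (P ! righti P)"
    using T_nth[OF geoD(4)[OF P], of "d - righti P"] md by simp
  ultimately show ?thesis by simp
qed

lemma tD:
  assumes P: "geo P" and k: "k \<le> d - righti P" and w: "w \<in> Rt k"
    and alt: "k < d - righti P \<or> (hyp_t P \<and> lefti P < righti P)"
  shows "w \<le> Max (set P)"
proof -
  interpret D: xg "dual ` V" "dE E" "dual t" "dual s" by (rule dual_xg)
  have PD: "D.geo (map dual (rev P))" using T_geo P by simp
  have Pne: "P \<noteq> []" using geoD(4)[OF P] by auto
  have md: "righti P \<le> d" using righti_prop[of P] geoD(4)[OF P] by fastforce
  have kl: "k \<le> lefti (map dual (rev P))" unfolding T_lefti[OF P] using k .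
  have wR: "dual w \<in> D.Rs k" unfolding T_Rs using w by simp
  have alt': "k < lefti (map dual (rev P)) \<or> (D.hyp_s (map dual (rev P)) \<and> lefti (map dual (rev P)) < righti (map dual (rev P)))"
    using alt T_hyp[OF P] md unfolding T_lefti[OF P] T_righti[OF P] by auto
  from D.H7[OF PD kl wR alt'] have "dual (Max (set P)) \<le> dual w" unfolding T_MinP[OF Pne] .
  then show ?thesis by simp
qed

lemma tE:
  assumes P: "geo P" and f: "f \<le> d" "k < d - f"
  shows "P ! f \<notin> Rt k"
proof -
  interpret D: xg "dual ` V" "dE E" "dual t" "dual s" by (rule dual_xg)
  have PD: "D.geo (map dual (rev P))" using T_geo P by simp
  have "map dual (rev P) ! (d - f) \<notin> D.Rs k" using D.not_Rs[OF PD, of "d - f" k] f unfolding T_d by simp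
  moreover have "map dual (rev P) ! (d - f) = dual (P ! f)" using T_nth[OF geoD(4)[OF P], of "d - f"] f by simp
  ultimately show ?thesis unfolding T_Rs by auto
qed

lemma tCC:
  assumes P: "geo P" and f: "f < d" and mem: "P ! Suc f \<in> Rt (d - Suc f)"
    and cond: "P ! f < Min (Rt (d - Suc f)) \<or> Max (Rt (d - Suc f)) < P ! f"
  shows "\<exists>Q. geo Q \<and> take (Suc f) Q = take (Suc f) P \<and>
    (\<forall>i. f < i \<and> i \<le> d \<longrightarrow> Q ! i \<in> {Max (Rt (d - i)), Min (Rt (d - i))})"
proof -
  interpret D: xg "dual ` V" "dE E" "dual t" "dual s" by (rule dual_xg)
  have PD: "D.geo (map dual (rev P))" using T_geo P by simp
  note lP = geoD(4)[OF P]
  define k where "k = d - Suc f"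
  have kd: "Suc k \<le> D.d" using f unfolding T_d k_def by simp
  have n1: "map dual (rev P) ! k = dual (P ! Suc f)" using T_nth[OF lP, of k] f by (simp add: k_def)
  have n2: "map dual (rev P) ! Suc k = dual (P ! f)" using T_nth[OF lP, of "Suc k"] f by (simp add: k_def Suc_diff_Suc)
  have m1: "map dual (rev P) ! k \<in> D.Rs k" unfolding T_Rs n1 using mem by (simp add: k_def)
  have c1: "Max (D.Rs k) < map dual (rev P) ! Suc k \<or> map dual (rev P) ! Suc k < Min (D.Rs k)"
    unfolding T_Rs n2 T_Max T_Min using cond by (auto simp: k_def)
  from D.CC[OF PD kd m1 c1] obtain Q' where Q': "D.geo Q'" "drop (Suc k) Q' = drop (Suc k) (map dual (rev P))"
    "\<forall>i\<le>k. Q' ! i \<in> {Min (D.Rs i), Max (D.Rs i)}" by blast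
  define Q where "Q = rev (map undual Q')"
  have Q: "geo Q" "Q' = map dual (rev Q)" using T_geo'[OF Q'(1)] by (auto simp: Q_def)
  note lQ = geoD(4)[OF Q(1)]
  have "map dual (drop (Suc k) (rev Q)) = map dual (drop (Suc k) (rev P))" using Q'(2) Q(2) by (simp add: drop_map)
  then have "map undual (map dual (drop (Suc k) (rev Q))) = map undual (map dual (drop (Suc k) (rev P)))" by simp
  then have "drop (Suc k) (rev Q) = drop (Suc k) (rev P)" unfolding map_undual_dual .
  then have "rev (take (Suc f) Q) = rev (take (Suc f) P)" using lQ lP f
    by (simp add: rev_take[symmetric] k_def drop_rev Suc_diff_Suc)
  then have tk: "take (Suc f) Q = take (Suc f) P" by simp
  have "\<forall>i. f < i \<and> i \<le> d \<longrightarrow> Q ! i \<in> {Max (Rt (d - i)), Min (Rt (d - i))}"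
  proof (intro allI impI)
    fix i assume i: "f < i \<and> i \<le> d"
    then have "d - i \<le> k" unfolding k_def by linarith
    then have "Q' ! (d - i) \<in> {Min (D.Rs (d - i)), Max (D.Rs (d - i))}" using Q'(3) by blast
    then have "dual (Q ! i) \<in> {dual (Max (Rt (d - i))), dual (Min (Rt (d - i)))}"
      unfolding T_Rs T_Min T_Max Q(2) T_nth[OF lQ, of "d - i"] using i by (simp add: T_nth[OF lQ])
    then show "Q ! i \<in> {Max (Rt (d - i)), Min (Rt (d - i))}" by auto
  qed
  then show ?thesis using Q(1) tk by blast
qed

lemma drop_eq_nth:
  assumes "drop n Q = drop n P" "length Q = length P" "n \<le> i" "i < length P"
  shows "Q ! i = P ! i"
proof -
  have "Q ! i = drop n Q ! (i - n)" using assms(2-4) by simp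
  also have "\<dots> = drop n P ! (i - n)" using assms(1) by simp
  also have "\<dots> = P ! i" using assms(3,4) by simp
  finally show ?thesis .
qed

lemma take_eq_nth:
  assumes "take n Q = take n P" "i < n"
  shows "Q ! i = P ! i"
proof -
  have "Q ! i = take n Q ! i" using assms(2) by simp
  also have "\<dots> = take n P ! i" using assms(1) by simp
  also have "\<dots> = P ! i" using assms(2) by simp
  finally show ?thesis .
qed

lemma minmax_keep:
  assumes Q: "geo Q" and a: "a \<le> d" and b: "b \<le> d" and qa: "Q ! a = L" and qb: "Q ! b = M"
    and bnd: "\<And>i. i \<le> d \<Longrightarrow> L \<le> Q ! i \<and> Q ! i \<le> M"
  shows "lefti Q = a" "righti Q = b" "Min (set Q) = L" "Max (set Q) = M"
proof -
  note lQ = geoD(4)[OF Q]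
  have dQ: "distinct Q" using geo_distinct[OF Q] .
  have bnd': "\<And>v. v \<in> set Q \<Longrightarrow> L \<le> v \<and> v \<le> M"
  proof -
    fix v assume "v \<in> set Q"
    then obtain i where "i < length Q" "Q ! i = v" by (metis in_set_conv_nth)
    then show "L \<le> v \<and> v \<le> M" using bnd[of i] lQ by simp
  qed
  have La: "L \<in> set Q" using qa a lQ by (metis le_imp_less_Suc nth_mem)
  have Mb: "M \<in> set Q" using qb b lQ by (metis le_imp_less_Suc nth_mem)
  show mn: "Min (set Q) = L" using bnd' La by (intro Min_eqI) auto
  show mx: "Max (set Q) = M" using bnd' Mb by (intro Max_eqI) auto
  show "lefti Q = a" using lefti_eq[OF dQ, of a] qa mn a lQ by simp
  show "righti Q = b" using righti_eq[OF dQ, of b] qb mx b lQ by simp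
qed

lemma hyp_keep:
  "hyp_s P \<Longrightarrow> hyp_t P \<Longrightarrow> Min (set Q) = Min (set P) \<Longrightarrow> Max (set Q) = Max (set P) \<Longrightarrow> hyp_s Q \<and> hyp_t Q"
  unfolding hyp_s_def hyp_t_def by simp

lemma select: "\<exists>P. geo P \<and> hyp_s P \<and> hyp_t P"
proof -
  define G where "G = {P. geo P}"
  have "G \<subseteq> {xs. set xs \<subseteq> V \<and> length xs = Suc d}"
    unfolding G_def geo_def by (auto dest: wft_set)
  moreover have "finite {xs. set xs \<subseteq> V \<and> length xs = Suc d}" using finite_lists_length_eq[OF finV] .
  ultimately have finG: "finite G" by (rule finite_subset)
  have neG: "G \<noteq> {}" using geo_ex by (auto simp: G_def)
  define Lm where "Lm = Min ((\<lambda>P. Min (set P)) ` G)"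
  define G1 where "G1 = {P \<in> G. Min (set P) = Lm}"
  have "Lm \<in> (\<lambda>P. Min (set P)) ` G" unfolding Lm_def using finG neG by simp
  then have neG1: "G1 \<noteq> {}" unfolding G1_def by auto
  have finG1: "finite G1" using finG unfolding G1_def by simp
  define Mm where "Mm = Max ((\<lambda>P. Max (set P)) ` G1)"
  have "Mm \<in> (\<lambda>P. Max (set P)) ` G1" unfolding Mm_def using finG1 neG1 by simp
  then obtain P where P: "P \<in> G1" "Max (set P) = Mm" by auto
  have gP: "geo P" and mP: "Min (set P) = Lm" using P(1) by (auto simp: G1_def G_def)
  have hs: "hyp_s P" unfolding hyp_s_def
  proof (intro allI impI)
    fix P' assume "geo P' \<and> Max (set P') = Max (set P)"
    then have "P' \<in> G" by (simp add: G_def)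
    then show "Min (set P) \<le> Min (set P')" unfolding mP Lm_def using finG by simp
  qed
  have ht: "hyp_t P" unfolding hyp_t_def
  proof (intro allI impI)
    fix Q assume a: "geo Q \<and> Min (set Q) = Min (set P)"
    then have "Q \<in> G" by (simp add: G_def)
    have "Min (set Q) = Lm" using a mP by simp
    then have "Q \<in> G1" using \<open>Q \<in> G\<close> by (simp add: G1_def)
    then show "Max (set Q) \<le> Max (set P)" unfolding P(2) Mm_def using finG1 by simp
  qed
  show ?thesis using gP hs ht by blast
qed

definition good :: "'a list \<Rightarrow> bool" where
  "good Q \<longleftrightarrow> geo Q \<and> (\<forall>i < righti Q. Q ! i \<in> {Min (Rs i), Max (Rs i)}) \<and>
     (\<forall>i. lefti Q < i \<and> i \<le> d \<longrightarrow> Q ! i \<in> {Max (Rt (d - i)), Min (Rt (d - i))})"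

lemma main_xg: "\<exists>Q. good Q"
proof -
  obtain P where P: "geo P" "hyp_s P" "hyp_t P" using select by blast
  note g = geoD[OF P(1)]
  have Pne: "P \<noteq> []" using g(4) by auto
  define l where "l = lefti P"
  define m where "m = righti P"
  define L where "L = Min (set P)"
  define M where "M = Max (set P)"
  have lP: "l \<le> d" "P ! l = L" using lefti_prop[OF Pne] g(4) by (auto simp: l_def L_def)
  have mP: "m \<le> d" "P ! m = M" using righti_prop[OF Pne] g(4) by (auto simp: m_def M_def)
  have Pb: "\<And>i. i \<le> d \<Longrightarrow> L \<le> P ! i \<and> P ! i \<le> M"
    using g(4) by (auto simp: L_def M_def)
  have tM: "t \<le> M" using Max_ge_t[OF P(1)] by (simp add: M_def)
  have sL: "L \<le> s" using Min_le_s[OF P(1)] by (simp add: L_def)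
  have H7L: "\<And>k w. k < l \<Longrightarrow> w \<in> Rs k \<Longrightarrow> L \<le> w"
  proof -
    fix k w assume "k < l" "w \<in> Rs k"
    then show "L \<le> w" using H7[OF P(1), of k w] by (simp add: l_def L_def)
  qed
  have Rs_le': "\<And>k v. v \<in> Rs k \<Longrightarrow> v \<le> t" by (rule Rs_le)
  have Rt_ge: "\<And>k v. v \<in> Rt k \<Longrightarrow> s \<le> v" using reach_S by blast
  have LM: "L < M" using sL tM st by simp
  have lm: "l \<noteq> m" using lP mP LM by auto
  show ?thesis
  proof (cases "l < m")
    case True
    have "\<exists>Q1. geo Q1 \<and> drop l Q1 = drop l P \<and> (\<forall>i < l. Q1 ! i \<in> {Min (Rs i), Max (Rs i)})"
    proof (cases l)
      case 0 then show ?thesis using P(1) by auto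
    next
      case (Suc k)
      have kR: "P ! k \<in> Rs k" using coreA[OF P(1)] True Suc by (simp add: m_def)
      have "Min (Rs k) \<in> Rs k" using Rs_fin Rs_ne by simp
      then have "L \<le> Min (Rs k)" using H7L[of k] Suc by simp
      moreover have "L \<notin> Rs k" using not_Rs[OF P(1) lP(1)] lP(2) Suc by auto
      moreover have "Min (Rs k) \<in> Rs k" using Rs_fin Rs_ne by simp
      ultimately have "P ! Suc k < Min (Rs k)" using lP(2) Suc by (metis order.not_eq_order_implies_strict)
      then obtain Q1 where "geo Q1" "drop (Suc k) Q1 = drop (Suc k) P" "\<forall>i\<le>k. Q1 ! i \<in> {Min (Rs i), Max (Rs i)}"
        using CC[OF P(1) _ kR] Suc lP(1) by blast
      then show ?thesis using Suc by (intro exI[of _ Q1]) auto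
    qed
    then obtain Q1 where Q1: "geo Q1" "drop l Q1 = drop l P" "\<forall>i < l. Q1 ! i \<in> {Min (Rs i), Max (Rs i)}" by blast
    note g1 = geoD[OF Q1(1)]
    have Q1eq: "\<And>i. l \<le> i \<Longrightarrow> i \<le> d \<Longrightarrow> Q1 ! i = P ! i" using drop_eq_nth[OF Q1(2)] g1(4) g(4) by simp
    have Q1b: "\<And>i. i \<le> d \<Longrightarrow> L \<le> Q1 ! i \<and> Q1 ! i \<le> M"
    proof -
      fix i assume i: "i \<le> d"
      show "L \<le> Q1 ! i \<and> Q1 ! i \<le> M"
      proof (cases "i < l")
        case True
        have "Q1 ! i \<in> Rs i" using Q1(3) True Rs_fin Rs_ne by auto
        then show ?thesis using H7L[OF True] Rs_le' tM by (meson order_trans)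
      next
        case False then show ?thesis using Q1eq[of i] Pb[of i] i by simp
      qed
    qed
    have mm1: "lefti Q1 = l" "righti Q1 = m" "Min (set Q1) = L" "Max (set Q1) = M"
      using minmax_keep[OF Q1(1) lP(1) mP(1) _ _ Q1b] Q1eq lP mP True by auto
    have hy1: "hyp_s Q1" "hyp_t Q1" using hyp_keep[OF P(2,3)] mm1 by (auto simp: L_def M_def)
    have "\<exists>Q2. geo Q2 \<and> take (Suc m) Q2 = take (Suc m) Q1 \<and> (\<forall>i. m < i \<and> i \<le> d \<longrightarrow> Q2 ! i \<in> {Max (Rt (d - i)), Min (Rt (d - i))})"
    proof (cases "m < d")
      case False then show ?thesis using Q1(1) mP(1) by auto
    next
      case md: True
      have mem: "Q1 ! Suc m \<in> Rt (d - Suc m)" using tA[OF Q1(1)] mm1 True md by simp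
      have tD1: "\<And>k w. k < d - m \<Longrightarrow> w \<in> Rt k \<Longrightarrow> w \<le> M"
      proof -
        fix k w assume "k < d - m" "w \<in> Rt k"
        then show "w \<le> M" using tD[OF Q1(1), of k w] mm1 by simp
      qed
      have "Max (Rt (d - Suc m)) \<in> Rt (d - Suc m)" using Rt_fin Rt_ne by simp
      then have "Max (Rt (d - Suc m)) \<le> M" using tD1[of "d - Suc m"] md by simp
      moreover have "M \<notin> Rt (d - Suc m)" using tE[OF Q1(1) mP(1), of "d - Suc m"] Q1eq[of m] mP True md by simp
      moreover have "Max (Rt (d - Suc m)) \<in> Rt (d - Suc m)" using Rt_fin Rt_ne by simp
      ultimately have "Max (Rt (d - Suc m)) < Q1 ! m" using Q1eq[of m] mP True
        by (metis order.not_eq_order_implies_strict order_less_imp_le)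
      then show ?thesis using tCC[OF Q1(1) md mem] by blast
    qed
    then obtain Q2 where Q2: "geo Q2" "take (Suc m) Q2 = take (Suc m) Q1"
      "\<forall>i. m < i \<and> i \<le> d \<longrightarrow> Q2 ! i \<in> {Max (Rt (d - i)), Min (Rt (d - i))}" by blast
    have Q2eq: "\<And>i. i \<le> m \<Longrightarrow> Q2 ! i = Q1 ! i" using take_eq_nth[OF Q2(2)] by simp
    have tD1: "\<And>k w. k < d - m \<Longrightarrow> w \<in> Rt k \<Longrightarrow> w \<le> M"
    proof -
      fix k w assume "k < d - m" "w \<in> Rt k"
      then show "w \<le> M" using tD[OF Q1(1), of k w] mm1 by simp
    qed
    have Q2b: "\<And>i. i \<le> d \<Longrightarrow> L \<le> Q2 ! i \<and> Q2 ! i \<le> M"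
    proof -
      fix i assume i: "i \<le> d"
      show "L \<le> Q2 ! i \<and> Q2 ! i \<le> M"
      proof (cases "m < i")
        case True
        have "Q2 ! i \<in> Rt (d - i)" using Q2(3) True i Rt_fin Rt_ne by auto
        moreover have "d - i < d - m" using True i by linarith
        ultimately show ?thesis using tD1 Rt_ge sL by (meson order_trans)
      next
        case False then show ?thesis using Q2eq[of i] Q1b[of i] i by simp
      qed
    qed
    have mm2: "lefti Q2 = l" "righti Q2 = m" "Min (set Q2) = L" "Max (set Q2) = M"
      using minmax_keep[OF Q2(1) lP(1) mP(1) _ _ Q2b] Q2eq Q1eq lP mP True by auto
    have hy2: "hyp_s Q2" "hyp_t Q2" using hyp_keep[OF P(2,3)] mm2 by (auto simp: L_def M_def)
    have part1: "\<forall>i < righti Q2. Q2 ! i \<in> {Min (Rs i), Max (Rs i)}"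
    proof (intro allI impI)
      fix i assume i: "i < righti Q2"
      consider "i < l" | "i = l" | "l < i" by linarith
      then show "Q2 ! i \<in> {Min (Rs i), Max (Rs i)}"
      proof cases
        case 1 then show ?thesis using Q2eq[of i] Q1(3) True by simp
      next
        case 2 then show ?thesis using coreC[OF Q2(1) hy2(1)] mm2 True by simp
      next
        case 3 then show ?thesis using coreB[OF Q2(1)] mm2 i by simp
      qed
    qed
    have part2: "\<forall>i. lefti Q2 < i \<and> i \<le> d \<longrightarrow> Q2 ! i \<in> {Max (Rt (d - i)), Min (Rt (d - i))}"
    proof (intro allI impI)
      fix i assume i: "lefti Q2 < i \<and> i \<le> d"
      consider "i < m" | "i = m" | "m < i" by linarith
      then show "Q2 ! i \<in> {Max (Rt (d - i)), Min (Rt (d - i))}"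
      proof cases
        case 1 then show ?thesis using tB[OF Q2(1)] mm2 i by simp
      next
        case 2 then show ?thesis using tC[OF Q2(1) hy2(2)] mm2 True by simp
      next
        case 3 then show ?thesis using Q2(3) i by simp
      qed
    qed
    show ?thesis using Q2(1) part1 part2 unfolding good_def by blast
  next
    case False
    then have ml: "m < l" using lm by simp
    have m0: "m \<noteq> 0"
    proof
      assume "m = 0"
      then have "M = s" using mP g(2) by simp
      then show False using tM st by simp
    qed
    have ld: "l < d"
    proof (rule ccontr)
      assume "\<not> l < d"
      then have "l = d" using lP(1) by simp
      then have "L = P ! d" using lP(2) by simp
      then have "L = t" unfolding g(3) .
      then show False using sL st by simp
    qed
    obtain k where k: "m = Suc k" using m0 by (cases m) auto
    have kR: "P ! k \<in> Rs k" using coreA[OF P(1)] k by (simp add: m_def)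
    have "Max (Rs k) \<in> Rs k" using Rs_fin Rs_ne by simp
    then have "Max (Rs k) \<le> M" using Rs_le' tM by (meson order_trans)
    moreover have "M \<notin> Rs k" using not_Rs[OF P(1) mP(1)] mP(2) k by auto
    moreover have "Max (Rs k) \<in> Rs k" using Rs_fin Rs_ne by simp
    ultimately have "Max (Rs k) < P ! Suc k" using mP(2) k by (metis order.not_eq_order_implies_strict)
    then obtain Q1 where Q1: "geo Q1" "drop m Q1 = drop m P" "\<forall>i\<le>k. Q1 ! i \<in> {Min (Rs i), Max (Rs i)}"
      using CC[OF P(1) _ kR] k mP(1) by blast
    note g1 = geoD[OF Q1(1)]
    have Q1eq: "\<And>i. m \<le> i \<Longrightarrow> i \<le> d \<Longrightarrow> Q1 ! i = P ! i" using drop_eq_nth[OF Q1(2)] g1(4) g(4) by simp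
    have Q1b: "\<And>i. i \<le> d \<Longrightarrow> L \<le> Q1 ! i \<and> Q1 ! i \<le> M"
    proof -
      fix i assume i: "i \<le> d"
      show "L \<le> Q1 ! i \<and> Q1 ! i \<le> M"
      proof (cases "i < m")
        case True
        have "i \<le> k" using True k by simp
        then have "Q1 ! i \<in> {Min (Rs i), Max (Rs i)}" using Q1(3) by blast
        then have "Q1 ! i \<in> Rs i" using Min_in[OF Rs_fin Rs_ne, of i] Max_in[OF Rs_fin Rs_ne, of i] by auto
        moreover have "i < l" using True ml by simp
        ultimately show ?thesis using H7L Rs_le' tM by (meson order_trans)
      next
        case False then show ?thesis using Q1eq[of i] Pb[of i] i by simp
      qed
    qed
    have mm1: "lefti Q1 = l" "righti Q1 = m" "Min (set Q1) = L" "Max (set Q1) = M"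
      using minmax_keep[OF Q1(1) lP(1) mP(1) _ _ Q1b] Q1eq lP mP ml by auto
    have hy1: "hyp_s Q1" "hyp_t Q1" using hyp_keep[OF P(2,3)] mm1 by (auto simp: L_def M_def)
    have mem: "Q1 ! Suc l \<in> Rt (d - Suc l)" using tA[OF Q1(1)] mm1 ld by simp
    have "L \<le> Min (Rt (d - Suc l))" using Rt_ge sL Rt_fin Rt_ne by (meson Min_in order_trans)
    moreover have "L \<notin> Rt (d - Suc l)" using tE[OF Q1(1), of l "d - Suc l"] Q1eq[of l] lP ld ml by simp
    moreover have "Min (Rt (d - Suc l)) \<in> Rt (d - Suc l)" using Rt_fin Rt_ne by simp
    ultimately have "Q1 ! l < Min (Rt (d - Suc l))" using Q1eq[of l] lP ml
      by (metis order.not_eq_order_implies_strict order_less_imp_le)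
    then obtain Q2 where Q2: "geo Q2" "take (Suc l) Q2 = take (Suc l) Q1"
      "\<forall>i. l < i \<and> i \<le> d \<longrightarrow> Q2 ! i \<in> {Max (Rt (d - i)), Min (Rt (d - i))}"
      using tCC[OF Q1(1) ld mem] by blast
    have Q2eq: "\<And>i. i \<le> l \<Longrightarrow> Q2 ! i = Q1 ! i" using take_eq_nth[OF Q2(2)] by simp
    have tD1: "\<And>k w. k < d - m \<Longrightarrow> w \<in> Rt k \<Longrightarrow> w \<le> M"
    proof -
      fix k w assume "k < d - m" "w \<in> Rt k"
      then show "w \<le> M" using tD[OF Q1(1), of k w] mm1 by simp
    qed
    have Q2b: "\<And>i. i \<le> d \<Longrightarrow> L \<le> Q2 ! i \<and> Q2 ! i \<le> M"
    proof -
      fix i assume i: "i \<le> d"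
      show "L \<le> Q2 ! i \<and> Q2 ! i \<le> M"
      proof (cases "l < i")
        case True
        have "Q2 ! i \<in> Rt (d - i)" using Q2(3) True i Rt_fin Rt_ne by auto
        moreover have "d - i < d - m" using True i ml by linarith
        ultimately show ?thesis using tD1 Rt_ge sL by (meson order_trans)
      next
        case False then show ?thesis using Q2eq[of i] Q1b[of i] i by simp
      qed
    qed
    have mm2: "lefti Q2 = l" "righti Q2 = m" "Min (set Q2) = L" "Max (set Q2) = M"
      using minmax_keep[OF Q2(1) lP(1) mP(1) _ _ Q2b] Q2eq Q1eq lP mP ml by auto
    have part1: "\<forall>i < righti Q2. Q2 ! i \<in> {Min (Rs i), Max (Rs i)}"
    proof (intro allI impI)
      fix i assume i: "i < righti Q2"
      then show "Q2 ! i \<in> {Min (Rs i), Max (Rs i)}" using Q2eq[of i] Q1(3) mm2 k ml by simp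
    qed
    have part2: "\<forall>i. lefti Q2 < i \<and> i \<le> d \<longrightarrow> Q2 ! i \<in> {Max (Rt (d - i)), Min (Rt (d - i))}"
      using Q2(3) mm2 by simp
    show ?thesis using Q2(1) part1 part2 unfolding good_def by blast
  qed
qed

end


theorem lemma11:
  fixes V :: "'a::linorder set" and E :: "'a \<Rightarrow> 'a \<Rightarrow> bool" and s t :: 'a
  assumes "simple_graph V E"
    and "X_property V E"
    and "s \<in> V" and "t \<in> V" and "s < t"
    and "\<exists>xs. walk_from_to V E s t xs"
  shows "\<exists>P. walk_from_to V E s t P \<and> distinct P \<and> length P = Suc (dist V E s t) \<and>
     (\<forall>i < righti P. P ! i \<in> {alpha_s V E s t i, beta_s V E s t i}) \<and>
     (\<forall>i. lefti P < i \<and> i \<le> dist V E s t \<longrightarrow>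
        P ! i \<in> {alpha_t V E s t (dist V E s t - i), beta_t V E s t (dist V E s t - i)})"
proof -
  interpret G: xg V E s t
    using assms by (unfold_locales) auto
  obtain Q where Q: "G.good Q" using G.main_xg by blast
  then have g: "G.geo Q" unfolding G.good_def by blast
  have "distinct Q" using G.geo_distinct[OF g] .
  then show ?thesis using Q g unfolding G.good_def G.geo_def alpha_s_def beta_s_def alpha_t_def beta_t_def
    by (intro exI[of _ Q]) auto
qed

end
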